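(* Let $(\mathcal V,g)$ be a spacetime and let $\vec\xi$ be a Killing vector field on it. Then the Bel tensor $B_{\alpha\beta\lambda\mu}$ satisfies $$ \xi^\alpha \xi^\beta \xi^\lambda B_{\alpha \beta\lambda [\mu} \xi_{\gamma]}= \frac{3}{2}\left\{ \xi_\lambda \xi_\beta R^{\lambda\sigma\beta\tau} \nabla_\tau \left( \xi_{[\mu}\nabla_{\sigma}\xi_{\gamma]}\right)+ \xi^\beta {R^{\rho\tau\sigma}}_{[\mu} \xi_{\gamma]} \nabla_\sigma \left(\xi_{[\rho} \nabla_{\tau}\xi_{\beta]} \right) \right\}, $$ where in $\xi_{[\mu}\nabla_{\sigma}\xi_{\gamma]}$ the antisymmetrization is over the three indices $\mu,\sigma,\gamma$ (i.e. this is, up to a constant factor, the 3-form $\bm\xi\wedge d\bm\xi$), and similarly $\xi_{[\rho}\nabla_\tau\xi_{\beta]}$ is antisymmetrized over $\rho,\tau,\beta$.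
   Context: A spacetime is a 4-dimensional manifold with a Lorentzian metric $g$ of signature $(-,+,+,+)$, Levi-Civita connection $\nabla$, Riemann tensor $R_{\alpha\beta\lambda\mu}$ with the convention that for every Killing vector field $\vec\xi$ ($\nabla_{(\alpha}\xi_{\beta)}=0$) one has $\nabla_\alpha\nabla_\beta\xi_\lambda=\xi_\rho R^{\rho}{}_{\alpha\beta\lambda}$. Square brackets denote antisymmetrization and round brackets symmetrization (with weight $1/n!$). Indices are raised and lowered with $g$; $\bm\xi$ denotes the 1-form metrically associated with $\vec\xi$. The Bel tensor is $$B_{\alpha\beta\lambda\mu}= R_{\alpha\rho\lambda\sigma} R_{\beta}{}^{\rho}{}_{\mu}{}^{\sigma} +R_{\alpha\rho\mu\sigma} R_{\beta}{}^{\rho}{}_{\lambda}{}^{\sigma} -\tfrac{1}{2}g_{\alpha\beta} R_{\rho\tau\lambda\sigma}R^{\rho\tau}{}_{\mu}{}^{\sigma} -\tfrac{1}{2}g_{\lambda\mu} R_{\alpha\rho\sigma\tau}R_{\beta}{}^{\rho\sigma\tau}+ \tfrac{1}{8}g_{\alpha\beta}g_{\lambda\mu} R_{\rho\tau\sigma\nu} R^{\rho\tau\sigma\nu}.$$ *)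

theory Defs
  imports "HOL-Analysis.Analysis"
begin

text \<open>Local coordinate description of a spacetime: an open set U of R^4 (a chart),
  the metric components g x $ a $ b, indices ranging over the 4-element type 4.\<close>

type_synonym pt = "real ^ 4"

definition pd :: "4 \<Rightarrow> (pt \<Rightarrow> real) \<Rightarrow> pt \<Rightarrow> real" where
  "pd i f x = frechet_derivative f (at x) (axis i 1)"

fun pds :: "4 list \<Rightarrow> (pt \<Rightarrow> real) \<Rightarrow> pt \<Rightarrow> real" where
  "pds [] f = f"
| "pds (i # is) f = pd i (pds is f)"

definition smooth_on :: "pt set \<Rightarrow> (pt \<Rightarrow> real) \<Rightarrow> bool" where
  "smooth_on U f \<longleftrightarrow> (\<forall>is. \<forall>x\<in>U. pds is f differentiable (at x))"

definition minkowski :: "real ^ 4 ^ 4" where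
  "minkowski = (\<chi> a b. if a = b then (if a = 0 then -1 else 1) else 0)"

definition lorentzian_metric :: "pt set \<Rightarrow> (pt \<Rightarrow> real ^ 4 ^ 4) \<Rightarrow> bool" where
  "lorentzian_metric U g \<longleftrightarrow> open U \<and>
     (\<forall>a b. smooth_on U (\<lambda>x. g x $ a $ b)) \<and>
     (\<forall>x\<in>U. transpose (g x) = g x \<and>
        (\<exists>P. invertible P \<and> transpose P ** g x ** P = minkowski))"

definition ginv :: "(pt \<Rightarrow> real ^ 4 ^ 4) \<Rightarrow> pt \<Rightarrow> 4 \<Rightarrow> 4 \<Rightarrow> real" where
  "ginv g x a b = matrix_inv (g x) $ a $ b"

definition christoffel :: "(pt \<Rightarrow> real ^ 4 ^ 4) \<Rightarrow> pt \<Rightarrow> 4 \<Rightarrow> 4 \<Rightarrow> 4 \<Rightarrow> real" where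
  "christoffel g x k i j = (1/2) * (\<Sum>l\<in>UNIV. ginv g x k l *
     (pd i (\<lambda>y. g y $ l $ j) x + pd j (\<lambda>y. g y $ l $ i) x - pd l (\<lambda>y. g y $ i $ j) x))"

text \<open>Covariant tensor fields are given by their components T x is, indexed by lists.
  Levi-Civita covariant derivative: (cov g T) x (a # is) = nabla_a T_{is}.\<close>
definition cov :: "(pt \<Rightarrow> real ^ 4 ^ 4) \<Rightarrow> (pt \<Rightarrow> 4 list \<Rightarrow> real) \<Rightarrow> pt \<Rightarrow> 4 list \<Rightarrow> real" where
  "cov g T x ais = (case ais of [] \<Rightarrow> 0 | a # is \<Rightarrow>
     pd a (\<lambda>y. T y is) x
     - (\<Sum>j<length is. \<Sum>e\<in>UNIV. christoffel g x e a (is ! j) * T x (is[j := e])))"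

text \<open>Riemann tensor: (nabla_a nabla_b - nabla_b nabla_a) w_c = Rm^d_{abc...} as
  riem_mixed a b c d w_d, and all-lower riem a b c d = riem_mixed a b c e g_{ed}.
  With this convention nabla_a nabla_b xi_c = xi_r R^r_{abc} for Killing xi.\<close>
definition riem_mixed :: "(pt \<Rightarrow> real ^ 4 ^ 4) \<Rightarrow> pt \<Rightarrow> 4 \<Rightarrow> 4 \<Rightarrow> 4 \<Rightarrow> 4 \<Rightarrow> real" where
  "riem_mixed g x a b c d =
     pd b (\<lambda>y. christoffel g y d a c) x - pd a (\<lambda>y. christoffel g y d b c) x
     + (\<Sum>e\<in>UNIV. christoffel g x e a c * christoffel g x d e b
                 - christoffel g x e b c * christoffel g x d e a)"

definition riem :: "(pt \<Rightarrow> real ^ 4 ^ 4) \<Rightarrow> pt \<Rightarrow> 4 \<Rightarrow> 4 \<Rightarrow> 4 \<Rightarrow> 4 \<Rightarrow> real" where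
  "riem g x a b c d = (\<Sum>e\<in>UNIV. riem_mixed g x a b c e * g x $ e $ d)"

definition bel :: "(pt \<Rightarrow> real ^ 4 ^ 4) \<Rightarrow> pt \<Rightarrow> 4 \<Rightarrow> 4 \<Rightarrow> 4 \<Rightarrow> 4 \<Rightarrow> real" where
  "bel g x al be la mu =
     (\<Sum>r\<in>UNIV. \<Sum>s\<in>UNIV. \<Sum>r'\<in>UNIV. \<Sum>s'\<in>UNIV.
        riem g x al r la s * ginv g x r r' * ginv g x s s' * riem g x be r' mu s')
   + (\<Sum>r\<in>UNIV. \<Sum>s\<in>UNIV. \<Sum>r'\<in>UNIV. \<Sum>s'\<in>UNIV.
        riem g x al r mu s * ginv g x r r' * ginv g x s s' * riem g x be r' la s')
   - (1/2) * g x $ al $ be * (\<Sum>r\<in>UNIV. \<Sum>t\<in>UNIV. \<Sum>s\<in>UNIV. \<Sum>r'\<in>UNIV. \<Sum>t'\<in>UNIV. \<Sum>s'\<in>UNIV.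
        riem g x r t la s * ginv g x r r' * ginv g x t t' * ginv g x s s' * riem g x r' t' mu s')
   - (1/2) * g x $ la $ mu * (\<Sum>r\<in>UNIV. \<Sum>s\<in>UNIV. \<Sum>t\<in>UNIV. \<Sum>r'\<in>UNIV. \<Sum>s'\<in>UNIV. \<Sum>t'\<in>UNIV.
        riem g x al r s t * ginv g x r r' * ginv g x s s' * ginv g x t t' * riem g x be r' s' t')
   + (1/8) * g x $ al $ be * g x $ la $ mu *
       (\<Sum>r\<in>UNIV. \<Sum>t\<in>UNIV. \<Sum>s\<in>UNIV. \<Sum>n\<in>UNIV. \<Sum>r'\<in>UNIV. \<Sum>t'\<in>UNIV. \<Sum>s'\<in>UNIV. \<Sum>n'\<in>UNIV.
        riem g x r t s n * ginv g x r r' * ginv g x t t' * ginv g x s s' * ginv g x n n'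
        * riem g x r' t' s' n')"

definition riem_up :: "(pt \<Rightarrow> real ^ 4 ^ 4) \<Rightarrow> pt \<Rightarrow> 4 \<Rightarrow> 4 \<Rightarrow> 4 \<Rightarrow> 4 \<Rightarrow> real" where
  "riem_up g x a b c d = (\<Sum>a'\<in>UNIV. \<Sum>b'\<in>UNIV. \<Sum>c'\<in>UNIV. \<Sum>d'\<in>UNIV.
     ginv g x a a' * ginv g x b b' * ginv g x c c' * ginv g x d d' * riem g x a' b' c' d')"

definition riem_uuud :: "(pt \<Rightarrow> real ^ 4 ^ 4) \<Rightarrow> pt \<Rightarrow> 4 \<Rightarrow> 4 \<Rightarrow> 4 \<Rightarrow> 4 \<Rightarrow> real" where
  "riem_uuud g x a b c d = (\<Sum>a'\<in>UNIV. \<Sum>b'\<in>UNIV. \<Sum>c'\<in>UNIV.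
     ginv g x a a' * ginv g x b b' * ginv g x c c' * riem g x a' b' c' d)"

definition lower :: "(pt \<Rightarrow> real ^ 4 ^ 4) \<Rightarrow> (pt \<Rightarrow> real ^ 4) \<Rightarrow> pt \<Rightarrow> 4 \<Rightarrow> real" where
  "lower g V x a = (\<Sum>b\<in>UNIV. g x $ a $ b * V x $ b)"

definition form1 :: "(pt \<Rightarrow> 4 \<Rightarrow> real) \<Rightarrow> pt \<Rightarrow> 4 list \<Rightarrow> real" where
  "form1 w x is = (case is of [a] \<Rightarrow> w x a | _ \<Rightarrow> 0)"

definition killing :: "pt set \<Rightarrow> (pt \<Rightarrow> real ^ 4 ^ 4) \<Rightarrow> (pt \<Rightarrow> real ^ 4) \<Rightarrow> bool" where
  "killing U g V \<longleftrightarrow> (\<forall>a. smooth_on U (\<lambda>x. V x $ a)) \<and>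
     (\<forall>x\<in>U. \<forall>a b. cov g (form1 (lower g V)) x [a, b] + cov g (form1 (lower g V)) x [b, a] = 0)"

definition xi_dxi :: "(pt \<Rightarrow> real ^ 4 ^ 4) \<Rightarrow> (pt \<Rightarrow> real ^ 4) \<Rightarrow> pt \<Rightarrow> 4 list \<Rightarrow> real" where
  "xi_dxi g V x is = (case is of [a, b, c] \<Rightarrow>
     (let w = lower g V x; D = (\<lambda>p q. cov g (form1 (lower g V)) x [p, q]) in
      (1/6) * (w a * D b c + w b * D c a + w c * D a b
             - w b * D a c - w a * D c b - w c * D b a))
   | _ \<Rightarrow> 0)"

end

theory Submission
  imports Defs
begin

lemma pd_of_has: "(f has_derivative f') (at x) \<Longrightarrow> pd i f x = f' (axis i 1)"
  by (simp add: pd_def frechet_derivative_at[symmetric])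

lemma has_pd: "f differentiable (at x) \<Longrightarrow> (f has_derivative frechet_derivative f (at x)) (at x)"
  using frechet_derivative_works by blast

lemma pd_add: "f differentiable (at x) \<Longrightarrow> g differentiable (at x) \<Longrightarrow>
   pd i (\<lambda>y. f y + g y) x = pd i f x + pd i g x"
  by (subst pd_of_has[OF has_derivative_add[OF has_pd has_pd]], assumption+) (simp add: pd_def)
  
lemma pd_diff: "f differentiable (at x) \<Longrightarrow> g differentiable (at x) \<Longrightarrow>
   pd i (\<lambda>y. f y - g y) x = pd i f x - pd i g x"
  by (subst pd_of_has[OF has_derivative_diff[OF has_pd has_pd]], assumption+) (simp add: pd_def)

lemma pd_mult: "f differentiable (at x) \<Longrightarrow> g differentiable (at x) \<Longrightarrow>
   pd i (\<lambda>y. f y * g y) x = pd i f x * g x + f x * pd i g x"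
  by (subst pd_of_has[OF has_derivative_mult[OF has_pd has_pd]], assumption+) (simp add: pd_def)

lemma pd_const: "pd i (\<lambda>y. c) x = 0"
  by (subst pd_of_has[OF has_derivative_const]) simp

lemma pd_cmult: "f differentiable (at x) \<Longrightarrow> pd i (\<lambda>y. c * f y) x = c * pd i f x"
  using pd_mult[of "\<lambda>y. c" x f i] by (simp add: pd_const)

lemma pd_sum: "finite A \<Longrightarrow> (\<And>a. a \<in> A \<Longrightarrow> f a differentiable (at x)) \<Longrightarrow>
   pd i (\<lambda>y. \<Sum>a\<in>A. f a y) x = (\<Sum>a\<in>A. pd i (f a) x)"
proof (induction A rule: finite_induct)
  case empty then show ?case by (simp add: pd_const)
next
  case (insert a A)
  have "pd i (\<lambda>y. \<Sum>a\<in>insert a A. f a y) x = pd i (\<lambda>y. f a y + (\<Sum>a\<in>A. f a y)) x"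
    using insert by simp
  also have "\<dots> = pd i (f a) x + pd i (\<lambda>y. \<Sum>a\<in>A. f a y) x"
    using insert by (intro pd_add) (auto intro!: differentiable_sum)
  finally show ?case using insert by simp
qed

lemma pd_local: assumes "open U" "x \<in> U" "\<And>y. y \<in> U \<Longrightarrow> f y = g y"
  shows "pd i f x = pd i g x"
proof -
  have "(\<lambda>f'. (f has_derivative f') (at x)) = (\<lambda>f'. (g has_derivative f') (at x))"
    using has_derivative_transform_within_open[OF _ assms(1,2), of f _ UNIV g]
      has_derivative_transform_within_open[OF _ assms(1,2), of g _ UNIV f] assms(3)
    by (auto intro!: ext)
  then show ?thesis unfolding pd_def frechet_derivative_def by simp
qed

lemma diff_local: assumes "open U" "x \<in> U" "\<And>y. y \<in> U \<Longrightarrow> f y = g y" "f differentiable (at x)"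
  shows "g differentiable (at x)"
  using assms has_derivative_transform_within_open[OF _ assms(1,2), of f _ UNIV g]
  unfolding differentiable_def by auto

lemma norm_axis1: "norm (axis i (1::real) :: real^4) = 1"
  by simp

lemma schwarz_est:
  fixes f :: "pt \<Rightarrow> real"
  assumes U: "open U" "x \<in> U" and fd: "\<And>y. y \<in> U \<Longrightarrow> f differentiable (at y)"
    and pdd: "pd i f differentiable (at x)" and e: "e > 0"
  shows "\<exists>d>0. \<forall>s. 0 < s \<and> s < d \<longrightarrow>
     \<bar>f (x + s *\<^sub>R axis i 1 + s *\<^sub>R axis j 1) - f (x + s *\<^sub>R axis i 1) - f (x + s *\<^sub>R axis j 1) + f x
       - s^2 * pd j (pd i f) x\<bar> \<le> 3 * e * s^2"
proof -
  define L where "L = frechet_derivative (pd i f) (at x)"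
  have hL: "(pd i f has_derivative L) (at x)" using pdd by (simp add: L_def frechet_derivative_works[symmetric])
  then have blL: "bounded_linear L" by (simp add: has_derivative_bounded_linear)
  then interpret L: bounded_linear L .
  obtain d1 where d1: "d1 > 0" "\<And>y. norm (y - x) < d1 \<Longrightarrow> \<bar>pd i f y - pd i f x - L (y - x)\<bar> \<le> e * norm (y - x)"
    using hL e unfolding has_derivative_at_alt by (metis real_norm_def)
  obtain r where r: "r > 0" "ball x r \<subseteq> U" using U openE by blast
  define ei :: pt where "ei = axis i 1"
  define ej :: pt where "ej = axis j 1"
  have nei: "norm ei = 1" "norm ej = 1" by (simp_all add: ei_def ej_def norm_axis1)
  have pdjL: "pd j (pd i f) x = L ej" by (simp add: pd_def L_def ej_def)
  show ?thesis
  proof (intro exI[of _ "min (d1/2) (r/2)"] conjI allI impI)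
    show "min (d1/2) (r/2) > 0" using d1 r by simp
    fix s :: real assume s: "0 < s \<and> s < min (d1/2) (r/2)"
    have inU: "x + t *\<^sub>R ei + c *\<^sub>R ej \<in> U" if "0 \<le> t" "t \<le> s" "0 \<le> c" "c \<le> s" for t c
    proof -
      have "norm (t *\<^sub>R ei + c *\<^sub>R ej) \<le> norm (t *\<^sub>R ei) + norm (c *\<^sub>R ej)" by (rule norm_triangle_ineq)
      also have "\<dots> = t + c" using that nei by simp
      finally have "norm (t *\<^sub>R ei + c *\<^sub>R ej) < r" using that s by linarith
      moreover have "dist x (x + (t *\<^sub>R ei + c *\<^sub>R ej)) = norm (t *\<^sub>R ei + c *\<^sub>R ej)"
        by (metis add_diff_cancel_left' dist_commute dist_norm)
      ultimately have "x + t *\<^sub>R ei + c *\<^sub>R ej \<in> ball x r" by (simp add: add.assoc)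
      then show ?thesis using r by blast
    qed
    define \<phi> where "\<phi> t = f (x + t *\<^sub>R ei + s *\<^sub>R ej) - f (x + t *\<^sub>R ei + 0 *\<^sub>R ej)" for t
    define \<phi>' where "\<phi>' t = (\<lambda>h. h * (pd i f (x + t *\<^sub>R ei + s *\<^sub>R ej) - pd i f (x + t *\<^sub>R ei + 0 *\<^sub>R ej)))" for t
    have hasd: "((\<lambda>t. f (x + t *\<^sub>R ei + c *\<^sub>R ej)) has_derivative (\<lambda>h. h * pd i f (x + t *\<^sub>R ei + c *\<^sub>R ej))) (at t)"
      if "0 \<le> t" "t \<le> s" "0 \<le> c" "c \<le> s" for t c
    proof -
      let ?p = "x + t *\<^sub>R ei + c *\<^sub>R ej"
      have f1: "(f has_derivative frechet_derivative f (at ?p)) (at ?p)"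
        using fd[OF inU[OF that]] by (simp add: frechet_derivative_works[symmetric])
      have f2: "((\<lambda>t. x + t *\<^sub>R ei + c *\<^sub>R ej) has_derivative (\<lambda>h. h *\<^sub>R ei)) (at t)"
        by (auto intro!: derivative_eq_intros)
      have "((\<lambda>t. f (x + t *\<^sub>R ei + c *\<^sub>R ej)) has_derivative (\<lambda>h. frechet_derivative f (at ?p) (h *\<^sub>R ei))) (at t)"
        using has_derivative_compose[OF f2 f1] by (simp add: o_def)
      moreover have "frechet_derivative f (at ?p) (h *\<^sub>R ei) = h * pd i f ?p" for h
      proof -
        interpret bounded_linear "frechet_derivative f (at ?p)" using f1 by (simp add: has_derivative_bounded_linear)
        show ?thesis using scale[of h "axis i 1"] by (simp add: pd_def ei_def)
      qed
      ultimately show ?thesis by simp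
    qed
    have "\<exists>t\<in>{0<..<s}. \<phi> s - \<phi> 0 = \<phi>' t (s - 0)"
    proof (rule mvt_simple)
      show "0 < s" using s by simp
      fix t assume t: "0 \<le> t" "t \<le> s"
      have "(\<phi> has_derivative \<phi>' t) (at t)"
        unfolding \<phi>_def \<phi>'_def using hasd[OF t, of s] hasd[OF t, of 0] s
        by (auto intro!: derivative_eq_intros simp: algebra_simps)
      then show "(\<phi> has_derivative \<phi>' t) (at t within {0..s})" by (rule has_derivative_at_withinI)
    qed
    then obtain t where t: "0 < t" "t < s" "\<phi> s - \<phi> 0 = \<phi>' t s" by auto
    define a1 where "a1 = pd i f (x + (t *\<^sub>R ei + s *\<^sub>R ej)) - pd i f x - L (t *\<^sub>R ei + s *\<^sub>R ej)"
    define a2 where "a2 = pd i f (x + t *\<^sub>R ei) - pd i f x - L (t *\<^sub>R ei)"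
    have n1: "norm (t *\<^sub>R ei + s *\<^sub>R ej) \<le> t + s"
      using norm_triangle_ineq[of "t *\<^sub>R ei" "s *\<^sub>R ej"] nei t s by simp
    have n2: "norm (t *\<^sub>R ei) = t" using nei t by simp
    have "\<bar>a1\<bar> \<le> e * norm (t *\<^sub>R ei + s *\<^sub>R ej)"
      unfolding a1_def using d1(2)[of "x + (t *\<^sub>R ei + s *\<^sub>R ej)"] n1 s t by simp
    also have "... \<le> e * (2 * s)" using n1 t e by (intro mult_left_mono) auto
    finally have a1b: "\<bar>a1\<bar> \<le> 2 * e* s" by simp
    have "\<bar>a2\<bar> \<le> e * t"
      unfolding a2_def using d1(2)[of "x + t *\<^sub>R ei"] n2 s t by simp
    also have "\<dots> \<le> e * s" using t e by simp
    finally have a2b: "\<bar>a2\<bar> \<le> e* s" .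
    have diffeq: "pd i f (x + t *\<^sub>R ei + s *\<^sub>R ej) - pd i f (x + t *\<^sub>R ei + 0 *\<^sub>R ej) = a1 - a2 + s * L ej"
      unfolding a1_def a2_def by (simp add: L.add L.scaleR add.assoc)
    have "f (x + s *\<^sub>R ei + s *\<^sub>R ej) - f (x + s *\<^sub>R ei) - f (x + s *\<^sub>R ej) + f x = \<phi> s - \<phi> 0"
      by (simp add: \<phi>_def)
    also have "\<dots> = s * (a1 - a2 + s * L ej)" using t(3) unfolding \<phi>'_def diffeq by simp
    also have "\<dots> = s * (a1 - a2) + s^2 * L ej" by (simp add: power2_eq_square algebra_simps)
    finally have eq: "f (x + s *\<^sub>R ei + s *\<^sub>R ej) - f (x + s *\<^sub>R ei) - f (x + s *\<^sub>R ej) + f x - s^2 * pd j (pd i f) x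
        = s * (a1 - a2)" using pdjL by simp
    have "\<bar>s * (a1 - a2)\<bar> \<le> s * (3*e* s)"
      using a1b a2b s by (simp add: abs_mult)
    then show "\<bar>f (x + s *\<^sub>R axis i 1 + s *\<^sub>R axis j 1) - f (x + s *\<^sub>R axis i 1) - f (x + s *\<^sub>R axis j 1) + f x
       - s^2 * pd j (pd i f) x\<bar> \<le> 3 * e * s^2"
      using eq by (simp add: ei_def ej_def power2_eq_square algebra_simps)
  qed
qed

lemma schwarz:
  fixes f :: "pt \<Rightarrow> real"
  assumes U: "open U" "x \<in> U" and fd: "\<And>y. y \<in> U \<Longrightarrow> f differentiable (at y)"
    and "pd i f differentiable (at x)" "pd j f differentiable (at x)"
  shows "pd j (pd i f) x = pd i (pd j f) x"
proof (rule ccontr)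
  let ?A = "pd j (pd i f) x" and ?B = "pd i (pd j f) x"
  assume ne: "?A \<noteq> ?B"
  define e where "e = \<bar>?A - ?B\<bar> / 12"
  have e: "e > 0" using ne by (simp add: e_def)
  obtain d1 where d1: "d1 > 0" "\<And>s. 0 < s \<and> s < d1 \<Longrightarrow>
     \<bar>f (x + s *\<^sub>R axis i 1 + s *\<^sub>R axis j 1) - f (x + s *\<^sub>R axis i 1) - f (x + s *\<^sub>R axis j 1) + f x
       - s^2 * ?A\<bar> \<le> 3 * e * s^2"
    using schwarz_est[OF U fd assms(4) e, of j] by blast
  obtain d2 where d2: "d2 > 0" "\<And>s. 0 < s \<and> s < d2 \<Longrightarrow>
     \<bar>f (x + s *\<^sub>R axis j 1 + s *\<^sub>R axis i 1) - f (x + s *\<^sub>R axis j 1) - f (x + s *\<^sub>R axis i 1) + f x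
       - s^2 * ?B\<bar> \<le> 3 * e * s^2"
    using schwarz_est[OF U fd assms(5) e, of i] by blast
  define s where "s = min d1 d2 / 2"
  have s: "0 < s" "s < d1" "s < d2" using d1 d2 by (auto simp: s_def)
  have c: "x + s *\<^sub>R axis j 1 + s *\<^sub>R axis i 1 = x + s *\<^sub>R axis i 1 + s *\<^sub>R axis j 1" by (simp add: algebra_simps)
  have h1: "\<bar>f (x + s *\<^sub>R axis i 1 + s *\<^sub>R axis j 1) - f (x + s *\<^sub>R axis i 1) - f (x + s *\<^sub>R axis j 1) + f x
       - s^2 * ?A\<bar> \<le> 3 * e * s^2" using d1(2)[of s] s by blast
  have h2: "\<bar>f (x + s *\<^sub>R axis i 1 + s *\<^sub>R axis j 1) - f (x + s *\<^sub>R axis j 1) - f (x + s *\<^sub>R axis i 1) + f x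
       - s^2 * ?B\<bar> \<le> 3 * e * s^2" using d2(2)[of s, unfolded c] s by blast
  define D where "D = f (x + s *\<^sub>R axis i 1 + s *\<^sub>R axis j 1)"
  define D1 where "D1 = f (x + s *\<^sub>R axis i 1)"
  define D2 where "D2 = f (x + s *\<^sub>R axis j 1)"
  have "\<bar>s^2 * ?A - s^2 * ?B\<bar> \<le> 6 * e * s^2"
    using h1 h2 unfolding abs_le_iff D_def[symmetric] D1_def[symmetric] D2_def[symmetric] by linarith
  moreover have "\<bar>s^2 * ?A - s^2 * ?B\<bar> = s^2 * \<bar>?A - ?B\<bar>" by (simp add: abs_mult right_diff_distrib[symmetric])
  ultimately have "s^2 * \<bar>?A - ?B\<bar> \<le> s^2 * (6 * e)" by (simp add: mult.assoc mult.commute)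
  then have "\<bar>?A - ?B\<bar> \<le> 6 * e" using s by simp
  then show False using e unfolding e_def by (simp add: field_simps)
qed

lemma det_minkowski_nz: "det minkowski \<noteq> 0"
proof -
  have "det minkowski = prod (\<lambda>i. minkowski $ i $ i) UNIV"
    by (rule det_diagonal) (simp add: minkowski_def)
  also have "\<dots> \<noteq> 0" by (simp add: minkowski_def)
  finally show ?thesis .
qed

lemma lor_invertible:
  assumes "invertible P" "transpose P ** G ** P = minkowski"
  shows "invertible (G :: real^4^4)"
proof -
  have "det (transpose P ** G ** P) = det P * det G * det P"
    by (simp add: det_mul)
  then have "det G \<noteq> 0" using assms det_minkowski_nz by auto
  then show ?thesis by (simp add: invertible_det_nz)
qed

lemma inv_props:
  fixes A :: "real^4^4" assumes "invertible A"
  shows "A ** matrix_inv A = mat 1" "matrix_inv A ** A = mat 1"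
proof -
  have "\<exists>A'. A ** A' = mat 1 \<and> A' ** A = mat 1" using assms unfolding invertible_def by blast
  then have "A ** matrix_inv A = mat 1 \<and> matrix_inv A ** A = mat 1"
    unfolding matrix_inv_def by (rule someI_ex)
  then show "A ** matrix_inv A = mat 1" "matrix_inv A ** A = mat 1" by auto
qed

lemma inv_sym:
  fixes A :: "real^4^4" assumes "invertible A" "transpose A = A"
  shows "transpose (matrix_inv A) = matrix_inv A"
proof -
  have "transpose (matrix_inv A) = transpose (matrix_inv A) ** (A ** matrix_inv A)"
    using inv_props(1)[OF assms(1)] by simp
  also have "\<dots> = (transpose (matrix_inv A) ** transpose A) ** matrix_inv A"
    using assms(2) by (simp add: matrix_mul_assoc)
  also have "transpose (matrix_inv A) ** transpose A = transpose (A ** matrix_inv A)"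
    by (simp add: matrix_transpose_mul)
  also have "\<dots> = mat 1" using inv_props(1)[OF assms(1)] by (simp add: transpose_mat)
  finally show ?thesis by simp
qed

lemma cramer_inv:
  fixes A :: "real^4^4" assumes "invertible A"
  shows "matrix_inv A $ a $ b = det (\<chi> i j. if j = a then axis b 1 $ i else A $ i $ j) / det A"
proof -
  have d: "det A \<noteq> 0" using assms by (simp add: invertible_det_nz)
  have "A *v (matrix_inv A *v axis b 1) = axis b 1"
    by (simp add: matrix_vector_mul_assoc inv_props[OF assms])
  then have "matrix_inv A *v axis b 1 = (\<chi> k. det (\<chi> i j. if j = k then axis b 1 $ i else A $ i $ j) / det A)"
    using cramer[OF d] by blast
  then have "(matrix_inv A *v axis b 1) $ a = det (\<chi> i j. if j = a then axis b 1 $ i else A $ i $ j) / det A"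
    by simp
  moreover have "(matrix_inv A *v axis b 1) $ a = matrix_inv A $ a $ b"
    by (simp add: matrix_vector_mult_basis column_def)
  ultimately show ?thesis by simp
qed

lemma differentiable_prod':
  fixes f :: "'i \<Rightarrow> pt \<Rightarrow> real"
  shows "finite I \<Longrightarrow> (\<And>i. i \<in> I \<Longrightarrow> f i differentiable (at x)) \<Longrightarrow> (\<lambda>y. \<Prod>i\<in>I. f i y) differentiable (at x)"
  by (induction I rule: finite_induct) auto

lemma det_differentiable:
  fixes M :: "pt \<Rightarrow> real^4^4"
  assumes "\<And>i j. (\<lambda>y. M y $ i $ j) differentiable (at x)"
  shows "(\<lambda>y. det (M y)) differentiable (at x)"
  unfolding det_def
  by (intro differentiable_sum differentiable_mult differentiable_const) (auto intro!: differentiable_prod' assms)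

lemma smooth_diff: "smooth_on U f \<Longrightarrow> y \<in> U \<Longrightarrow> f differentiable (at y)"
  unfolding smooth_on_def using pds.simps(1) by metis
lemma smooth_pd: "smooth_on U f \<Longrightarrow> y \<in> U \<Longrightarrow> pd i f differentiable (at y)"
  unfolding smooth_on_def by (metis pds.simps)
lemma smooth_pd2: "smooth_on U f \<Longrightarrow> y \<in> U \<Longrightarrow> pd j (pd i f) differentiable (at y)"
  unfolding smooth_on_def by (metis pds.simps)

locale st =
  fixes U g V x
  assumes lor: "lorentzian_metric U g" and kil: "killing U g V" and xU: "x \<in> U"
begin

lemma openU: "open U" using lor by (simp add: lorentzian_metric_def)

lemma sm_g: "smooth_on U (\<lambda>y. g y $ a $ b)" using lor by (simp add: lorentzian_metric_def)
lemma sm_V: "smooth_on U (\<lambda>y. V y $ a)" using kil by (simp add: killing_def)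

lemma gsym: "y \<in> U \<Longrightarrow> g y $ a $ b = g y $ b $ a"
proof -
  assume y: "y \<in> U"
  have "transpose (g y) = g y" using lor y unfolding lorentzian_metric_def by blast
  then have "transpose (g y) $ b $ a = g y $ b $ a" by simp
  then show ?thesis by (simp add: transpose_def)
qed

lemma ginv_inv: "y \<in> U \<Longrightarrow> invertible (g y)"
  using lor unfolding lorentzian_metric_def by (metis lor_invertible)

lemma ginv_l: "y \<in> U \<Longrightarrow> (\<Sum>b\<in>UNIV. g y $ a $ b * ginv g y b c) = (if a = c then 1 else 0)"
  using inv_props(1)[OF ginv_inv, of y] unfolding ginv_def
  by (auto simp: matrix_matrix_mult_def mat_def vec_eq_iff)

lemma ginv_r: "y \<in> U \<Longrightarrow> (\<Sum>b\<in>UNIV. ginv g y a b * g y $ b $ c) = (if a = c then 1 else 0)"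
  using inv_props(2)[OF ginv_inv, of y] unfolding ginv_def
  by (auto simp: matrix_matrix_mult_def mat_def vec_eq_iff)

lemma hsym: "y \<in> U \<Longrightarrow> ginv g y a b = ginv g y b a"
proof -
  assume y: "y \<in> U"
  have "transpose (g y) = g y" using lor y unfolding lorentzian_metric_def by blast
  then have "transpose (matrix_inv (g y)) = matrix_inv (g y)" using inv_sym ginv_inv y by blast
  then have "transpose (matrix_inv (g y)) $ a $ b = matrix_inv (g y) $ a $ b" by simp
  then show ?thesis unfolding ginv_def by (simp add: transpose_def)
qed

lemma pdg_sym: "y \<in> U \<Longrightarrow> pd i (\<lambda>y. g y $ a $ b) y = pd i (\<lambda>y. g y $ b $ a) y"
  using pd_local[OF openU, of y "\<lambda>y. g y $ a $ b" "\<lambda>y. g y $ b $ a"] gsym by blast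

lemma dg: "y \<in> U \<Longrightarrow> (\<lambda>y. g y $ a $ b) differentiable (at y)" using smooth_diff[OF sm_g] .
lemma dpdg: "y \<in> U \<Longrightarrow> pd i (\<lambda>y. g y $ a $ b) differentiable (at y)" using smooth_pd[OF sm_g] .
lemma dV: "y \<in> U \<Longrightarrow> (\<lambda>y. V y $ a) differentiable (at y)" using smooth_diff[OF sm_V] .
lemma dpdV: "y \<in> U \<Longrightarrow> pd i (\<lambda>y. V y $ a) differentiable (at y)" using smooth_pd[OF sm_V] .

lemma dh: "(\<lambda>y. ginv g y a b) differentiable (at x)"
proof (rule diff_local[OF openU xU])
  show "(\<lambda>y. det (\<chi> i j. if j = a then axis b 1 $ i else g y $ i $ j) / det (g y)) differentiable (at x)"
  proof (rule differentiable_divide)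
    show "(\<lambda>y. det (\<chi> i j. if j = a then axis b 1 $ i else g y $ i $ j)) differentiable (at x)"
      apply (rule det_differentiable)
      subgoal for i j by (cases "j = a") (auto intro: dg[OF xU])
      done
    show "(\<lambda>y. det (g y)) differentiable (at x)"
      by (rule det_differentiable) (auto intro: dg[OF xU])
    show "det (g x) \<noteq> 0" using ginv_inv[OF xU] by (simp add: invertible_det_nz)
  qed
  fix y assume "y \<in> U"
  then show "det (\<chi> i j. if j = a then axis b 1 $ i else g y $ i $ j) / det (g y) = ginv g y a b"
    using cramer_inv[OF ginv_inv] by (simp add: ginv_def)
qed

lemma dGam: "(\<lambda>y. christoffel g y k i j) differentiable (at x)"
  unfolding christoffel_def
  by (auto intro!: differentiable_sum differentiable_mult differentiable_const differentiable_add differentiable_diff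
      differentiable_divide dh dpdg xU)

lemma Gam_sym: "y \<in> U \<Longrightarrow> christoffel g y k i j = christoffel g y k j i"
  unfolding christoffel_def using pdg_sym[of y] by (simp add: algebra_simps)

lemma dw: "y \<in> U \<Longrightarrow> (\<lambda>y. lower g V y a) differentiable (at y)"
  unfolding lower_def by (auto intro!: differentiable_sum differentiable_mult dg dV)

lemma pdw: "y \<in> U \<Longrightarrow> pd k (\<lambda>y. lower g V y a) y =
   (\<Sum>b\<in>UNIV. pd k (\<lambda>y. g y $ a $ b) y * V y $ b + g y $ a $ b * pd k (\<lambda>y. V y $ b) y)"
  unfolding lower_def
  by (subst pd_sum) (auto intro!: differentiable_mult dg dV simp: pd_mult dg dV)

lemma dpdw: "pd k (\<lambda>y. lower g V y a) differentiable (at x)"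
proof (rule diff_local[OF openU xU])
  show "(\<lambda>y. \<Sum>b\<in>UNIV. pd k (\<lambda>y. g y $ a $ b) y * V y $ b + g y $ a $ b * pd k (\<lambda>y. V y $ b) y) differentiable (at x)"
    by (auto intro!: differentiable_sum differentiable_mult differentiable_add dg dV dpdg dpdV xU)
  show "y \<in> U \<Longrightarrow> (\<Sum>b\<in>UNIV. pd k (\<lambda>y. g y $ a $ b) y * V y $ b + g y $ a $ b * pd k (\<lambda>y. V y $ b) y) =
     pd k (\<lambda>y. lower g V y a) y" for y using pdw by simp
qed

lemma Dw_eq: "cov g (form1 (lower g V)) y [p, q] =
   pd p (\<lambda>y. lower g V y q) y - (\<Sum>e\<in>UNIV. christoffel g y e p q * lower g V y e)"
proof -
  have "cov g (form1 (lower g V)) y [p, q] = pd p (\<lambda>y. form1 (lower g V) y [q]) y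
     - (\<Sum>j<length [q]. \<Sum>e\<in>UNIV. christoffel g y e p ([q] ! j) * form1 (lower g V) y ([q][j := e]))"
    unfolding cov_def by simp
  also have "(\<lambda>y. form1 (lower g V) y [q]) = (\<lambda>y. lower g V y q)" by (simp add: form1_def)
  also have "(\<Sum>j<length [q]. \<Sum>e\<in>UNIV. christoffel g y e p ([q] ! j) * form1 (lower g V) y ([q][j := e]))
     = (\<Sum>e\<in>UNIV. christoffel g y e p q * lower g V y e)" by (simp add: form1_def)
  finally show ?thesis .
qed

lemma dDw: "(\<lambda>y. cov g (form1 (lower g V)) y [p, q]) differentiable (at x)"
  unfolding Dw_eq
  by (auto intro!: differentiable_sum differentiable_mult differentiable_diff dpdw dGam dw xU)

end

lemma ricci_alg:
  fixes G :: "'n::finite \<Rightarrow> 'n \<Rightarrow> 'n \<Rightarrow> real" and dG :: "'n \<Rightarrow> 'n \<Rightarrow> 'n \<Rightarrow> 'n \<Rightarrow> real"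
    and W :: "'n \<Rightarrow> real" and dW :: "'n \<Rightarrow> 'n \<Rightarrow> real"
  assumes Gs: "\<And>e a b. G e a b = G e b a" and ds: "ddW t p q = ddW p t q"
  defines "D \<equiv> \<lambda>a b. dW a b - (\<Sum>e\<in>UNIV. G e a b * W e)"
  shows "(ddW t p q - (\<Sum>e\<in>UNIV. dG t e p q * W e + G e p q * dW t e)
           - (\<Sum>e\<in>UNIV. G e t p * D e q) - (\<Sum>e\<in>UNIV. G e t q * D p e))
       - (ddW p t q - (\<Sum>e\<in>UNIV. dG p e t q * W e + G e t q * dW p e)
           - (\<Sum>e\<in>UNIV. G e p t * D e q) - (\<Sum>e\<in>UNIV. G e p q * D t e))
       = (\<Sum>d\<in>UNIV. (dG p d t q - dG t d p q
            + (\<Sum>e\<in>UNIV. G e t q * G d e p - G e p q * G d e t)) * W d)"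
proof -
  have R: "(\<Sum>d\<in>UNIV. (dG p d t q - dG t d p q
            + (\<Sum>e\<in>UNIV. G e t q * G d e p - G e p q * G d e t)) * W d)
     = (\<Sum>d\<in>UNIV. (dG p d t q - dG t d p q) * W d)
       + (\<Sum>e\<in>UNIV. \<Sum>n\<in>UNIV. G e t q * (G n p e * W n)) - (\<Sum>e\<in>UNIV. \<Sum>n\<in>UNIV. G e p q * (G n t e * W n))"
    apply (simp add: sum_distrib_left sum_distrib_right sum_subtractf left_diff_distrib distrib_right sum.distrib)
    apply (subst (1 2) sum.swap)
    apply (simp add: Gs[of _ _ p] Gs[of _ _ t] mult.assoc)
    done
  have L: "(ddW t p q - (\<Sum>e\<in>UNIV. dG t e p q * W e + G e p q * dW t e)
           - (\<Sum>e\<in>UNIV. G e t p * D e q) - (\<Sum>e\<in>UNIV. G e t q * D p e))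
       - (ddW p t q - (\<Sum>e\<in>UNIV. dG p e t q * W e + G e t q * dW p e)
           - (\<Sum>e\<in>UNIV. G e p t * D e q) - (\<Sum>e\<in>UNIV. G e p q * D t e))
     = (\<Sum>d\<in>UNIV. (dG p d t q - dG t d p q) * W d)
       + (\<Sum>e\<in>UNIV. \<Sum>n\<in>UNIV. G e t q * (G n p e * W n)) - (\<Sum>e\<in>UNIV. \<Sum>n\<in>UNIV. G e p q * (G n t e * W n))"
    unfolding D_def using ds
    by (simp add: Gs[of _ p t] sum_subtractf sum.distrib right_diff_distrib sum_distrib_left left_diff_distrib)
  show ?thesis using L R by simp
qed


context st begin

lemma K_eq: "cov g (cov g (form1 (lower g V))) x [t, p, q] =
   pd t (\<lambda>y. cov g (form1 (lower g V)) y [p, q]) x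
   - (\<Sum>e\<in>UNIV. christoffel g x e t p * cov g (form1 (lower g V)) x [e, q])
   - (\<Sum>e\<in>UNIV. christoffel g x e t q * cov g (form1 (lower g V)) x [p, e])"
  by (simp add: cov_def[of g "cov g (form1 (lower g V))"] numeral_2_eq_2 lessThan_Suc sum.distrib)

lemma pdDw: "pd t (\<lambda>y. cov g (form1 (lower g V)) y [p, q]) x =
   pd t (pd p (\<lambda>y. lower g V y q)) x
   - (\<Sum>e\<in>UNIV. pd t (\<lambda>y. christoffel g y e p q) x * lower g V x e
        + christoffel g x e p q * pd t (\<lambda>y. lower g V y e) x)"
proof -
  have "(\<lambda>y. cov g (form1 (lower g V)) y [p, q]) =
     (\<lambda>y. pd p (\<lambda>y. lower g V y q) y - (\<Sum>e\<in>UNIV. christoffel g y e p q * lower g V y e))"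
    by (rule ext, rule Dw_eq)
  then show ?thesis
    by (simp add: pd_diff pd_sum pd_mult dpdw dGam dw xU differentiable_sum)
qed

lemma K_anti: "cov g (cov g (form1 (lower g V))) x [t, p, q] + cov g (cov g (form1 (lower g V))) x [t, q, p] = 0"
proof -
  have kl: "y \<in> U \<Longrightarrow> cov g (form1 (lower g V)) y [a, b] + cov g (form1 (lower g V)) y [b, a] = 0" for y a b
    using kil unfolding killing_def by blast
  have "pd t (\<lambda>y. cov g (form1 (lower g V)) y [p, q]) x + pd t (\<lambda>y. cov g (form1 (lower g V)) y [q, p]) x
     = pd t (\<lambda>y. cov g (form1 (lower g V)) y [p, q] + cov g (form1 (lower g V)) y [q, p]) x"
    by (simp add: pd_add dDw)
  also have "\<dots> = pd t (\<lambda>y. 0) x" by (rule pd_local[OF openU xU]) (use kl in auto)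
  finally have 1: "pd t (\<lambda>y. cov g (form1 (lower g V)) y [p, q]) x + pd t (\<lambda>y. cov g (form1 (lower g V)) y [q, p]) x = 0"
    by (simp add: pd_const)
  have 2: "cov g (form1 (lower g V)) x [e, q] = - cov g (form1 (lower g V)) x [q, e]" for e q
    using kl[OF xU] by (simp add: eq_neg_iff_add_eq_0)
  show ?thesis unfolding K_eq using 1
    by (simp add: 2[of _ p] 2[of _ q] sum_negf)
qed

lemma ricci: "cov g (cov g (form1 (lower g V))) x [t, p, q] - cov g (cov g (form1 (lower g V))) x [p, t, q]
   = (\<Sum>d\<in>UNIV. riem_mixed g x t p q d * lower g V x d)"
proof -
  have ds: "pd t (pd p (\<lambda>y. lower g V y q)) x = pd p (pd t (\<lambda>y. lower g V y q)) x"
    by (rule schwarz[OF openU xU dw dpdw dpdw])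
  have Dx: "cov g (form1 (lower g V)) x [a, b] = pd a (\<lambda>y. lower g V y b) x - (\<Sum>e\<in>UNIV. christoffel g x e a b * lower g V x e)" for a b
    by (rule Dw_eq)
  have Gs: "christoffel g x e a b = christoffel g x e b a" for e a b by (rule Gam_sym[OF xU])
  show ?thesis
    unfolding K_eq pdDw Dx riem_mixed_def
    by (rule ricci_alg[where G="christoffel g x" and ddW="\<lambda>t p q. pd t (pd p (\<lambda>y. lower g V y q)) x"
       and dG = "\<lambda>t e a b. pd t (\<lambda>y. christoffel g y e a b) x" and W = "lower g V x"
       and dW = "\<lambda>a b. pd a (\<lambda>y. lower g V y b) x", OF Gs ds])
qed

end

lemma bianchi_alg:
  fixes G :: "'n::finite \<Rightarrow> 'n \<Rightarrow> 'n \<Rightarrow> real" and dG :: "'n \<Rightarrow> 'n \<Rightarrow> 'n \<Rightarrow> 'n \<Rightarrow> real"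
  assumes Gs: "\<And>e a b. G e a b = G e b a" and dGs: "\<And>t e a b. dG t e a b = dG t e b a"
  defines "RM \<equiv> \<lambda>a b c d. dG b d a c - dG a d b c + (\<Sum>e\<in>UNIV. G e a c * G d e b - G e b c * G d e a)"
  shows "RM a b c d + RM b c a d + RM c a b d = 0"
proof -
  have "RM a b c d + RM b c a d + RM c a b d = (\<Sum>e\<in>UNIV. (G e a c * G d e b - G e b c * G d e a)
     + (G e b a * G d e c - G e c a * G d e b) + (G e c b * G d e a - G e a b * G d e c))"
    unfolding RM_def using dGs[of b d a c] dGs[of a d b c] dGs[of c d b a]
    by (simp add: sum.distrib sum_subtractf algebra_simps)
  also have "\<dots> = 0" using Gs[of _ a c] Gs[of _ b c] Gs[of _ a b] by (simp add: algebra_simps)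
  finally show ?thesis .
qed

lemma metric_alg:
  fixes G :: "'n::finite \<Rightarrow> 'n \<Rightarrow> 'n \<Rightarrow> real" and dG :: "'n \<Rightarrow> 'n \<Rightarrow> 'n \<Rightarrow> 'n \<Rightarrow> real"
  assumes A: "\<And>b d a c. (\<Sum>e\<in>UNIV. gx d e * dG b e a c) = pdCl b d a c - (\<Sum>e\<in>UNIV. pdg b d e * G e a c)"
    and B: "\<And>f b d. (\<Sum>e\<in>UNIV. G e f b * gx e d) = Cl d f b"
    and C: "\<And>b d e. pdg b d e = Cl e b d + Cl d b e"
    and D: "\<And>d b e. Cl d b e = Cl d e b"
    and gs: "\<And>a b. gx a b = gx b a"
  shows "(\<Sum>e\<in>UNIV. (dG b e a c - dG a e b c + (\<Sum>f\<in>UNIV. G f a c * G e f b - G f b c * G e f a)) * gx e d)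
    = pdCl b d a c - pdCl a d b c - (\<Sum>e\<in>UNIV. Cl e b d * G e a c) + (\<Sum>e\<in>UNIV. Cl e a d * G e b c)"
proof -
  have 1: "(\<Sum>e\<in>UNIV. (\<Sum>f\<in>UNIV. G f a c * G e f b) * gx e d) = (\<Sum>f\<in>UNIV. G f a c * Cl d f b)" for a b c
  proof -
    have "(\<Sum>e\<in>UNIV. (\<Sum>f\<in>UNIV. G f a c * G e f b) * gx e d) = (\<Sum>f\<in>UNIV. \<Sum>e\<in>UNIV. G f a c * (G e f b * gx e d))"
      by (subst sum.swap) (simp add: sum_distrib_right mult.assoc)
    also have "\<dots> = (\<Sum>f\<in>UNIV. G f a c * Cl d f b)" by (simp add: sum_distrib_left[symmetric] B)
    finally show ?thesis .
  qed
  have 2: "(\<Sum>e\<in>UNIV. dG b e a c * gx e d) = pdCl b d a c - (\<Sum>e\<in>UNIV. pdg b d e * G e a c)" for b a c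
    using A[of d b a c] by (simp add: gs mult.commute)
  have 3: "(\<Sum>e\<in>UNIV. pdg b d e * G e a c) = (\<Sum>e\<in>UNIV. Cl e b d * G e a c) + (\<Sum>f\<in>UNIV. G f a c * Cl d f b)" for b a c
    by (simp add: C D[of d b] sum.distrib algebra_simps)
  have E: "(\<Sum>e\<in>UNIV. (dG b e a c - dG a e b c + (\<Sum>f\<in>UNIV. G f a c * G e f b - G f b c * G e f a)) * gx e d)
    = (\<Sum>e\<in>UNIV. dG b e a c * gx e d) - (\<Sum>e\<in>UNIV. dG a e b c * gx e d)
      + (\<Sum>e\<in>UNIV. (\<Sum>f\<in>UNIV. G f a c * G e f b) * gx e d) - (\<Sum>e\<in>UNIV. (\<Sum>f\<in>UNIV. G f b c * G e f a) * gx e d)"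
    by (simp add: sum.distrib sum_subtractf left_diff_distrib distrib_right)
  show ?thesis
    unfolding E 1 2 3 by linarith
qed

lemma hsym_alg:
  fixes h :: "'n::finite \<Rightarrow> 'n \<Rightarrow> real"
  assumes "\<And>a b. h a b = h b a"
  shows "(\<Sum>e\<in>UNIV. X e * (\<Sum>l\<in>UNIV. h e l * Y l)) = (\<Sum>e\<in>UNIV. Y e * (\<Sum>l\<in>UNIV. h e l * X l))"
  apply (simp add: sum_distrib_left)
  apply (subst sum.swap)
  apply (simp add: assms mult_ac)
  done

context st begin

lemma dGam_sym: "pd t (\<lambda>y. christoffel g y e a b) x = pd t (\<lambda>y. christoffel g y e b a) x"
  by (rule pd_local[OF openU xU]) (rule Gam_sym)

lemma rm_bianchi: "riem_mixed g x a b c d + riem_mixed g x b c a d + riem_mixed g x c a b d = 0"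
  unfolding riem_mixed_def
  by (rule bianchi_alg[where G="christoffel g x" and dG="\<lambda>t e a b. pd t (\<lambda>y. christoffel g y e a b) x",
        OF Gam_sym[OF xU] dGam_sym])

lemma rm_anti: "riem_mixed g x a b c d = - riem_mixed g x b a c d"
  unfolding riem_mixed_def by (simp add: sum_subtractf)

lemma riem_bianchi: "riem g x a b c d + riem g x b c a d + riem g x c a b d = 0"
proof -
  have "riem g x a b c d + riem g x b c a d + riem g x c a b d
     = (\<Sum>e\<in>UNIV. (riem_mixed g x a b c e + riem_mixed g x b c a e + riem_mixed g x c a b e) * g x $ e $ d)"
    unfolding riem_def by (simp add: sum.distrib distrib_right)
  also have "\<dots> = 0" by (simp add: rm_bianchi)
  finally show ?thesis .
qed

lemma riem_anti12: "riem g x a b c d = - riem g x b a c d"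
  unfolding riem_def by (simp add: rm_anti[of a b] sum_negf)

definition Cl :: "4 \<Rightarrow> 4 \<Rightarrow> 4 \<Rightarrow> pt \<Rightarrow> real" where
  "Cl d a c y = (1/2) * (pd a (\<lambda>y. g y $ d $ c) y + pd c (\<lambda>y. g y $ d $ a) y - pd d (\<lambda>y. g y $ a $ c) y)"

lemma Gam_Cl: "christoffel g y k a c = (\<Sum>l\<in>UNIV. ginv g y k l * Cl l a c y)"
  unfolding christoffel_def Cl_def by (simp add: sum_distrib_left mult_ac)

lemma gGam: "y \<in> U \<Longrightarrow> (\<Sum>e\<in>UNIV. g y $ d $ e * christoffel g y e a c) = Cl d a c y"
proof -
  assume y: "y \<in> U"
  have "(\<Sum>e\<in>UNIV. g y $ d $ e * christoffel g y e a c) = (\<Sum>l\<in>UNIV. (\<Sum>e\<in>UNIV. g y $ d $ e * ginv g y e l) * Cl l a c y)"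
    unfolding Gam_Cl sum_distrib_left sum_distrib_right by (subst sum.swap) (simp add: mult.assoc)
  also have "\<dots> = (\<Sum>l\<in>UNIV. (if d = l then Cl l a c y else 0))"
    by (rule sum.cong) (auto simp: ginv_l[OF y])
  also have "\<dots> = Cl d a c y" by simp
  finally show ?thesis .
qed

lemma dCl: "(\<lambda>y. Cl d a c y) differentiable (at x)"
  unfolding Cl_def by (auto intro!: differentiable_divide differentiable_add differentiable_diff dpdg xU)

lemma gdGam: "(\<Sum>e\<in>UNIV. g x $ d $ e * pd b (\<lambda>y. christoffel g y e a c) x)
   = pd b (Cl d a c) x - (\<Sum>e\<in>UNIV. pd b (\<lambda>y. g y $ d $ e) x * christoffel g x e a c)"
proof -
  have "pd b (Cl d a c) x = pd b (\<lambda>y. \<Sum>e\<in>UNIV. g y $ d $ e * christoffel g y e a c) x"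
    by (rule pd_local[OF openU xU]) (simp add: gGam)
  also have "\<dots> = (\<Sum>e\<in>UNIV. pd b (\<lambda>y. g y $ d $ e) x * christoffel g x e a c + g x $ d $ e * pd b (\<lambda>y. christoffel g y e a c) x)"
    by (simp add: pd_sum pd_mult dg[OF xU] dGam differentiable_mult)
  finally show ?thesis by (simp add: sum.distrib)
qed

lemma compat: "pd b (\<lambda>y. g y $ d $ e) x = Cl e b d x + Cl d b e x"
  unfolding Cl_def using pdg_sym[OF xU, of b d e] pdg_sym[OF xU, of d e b] pdg_sym[OF xU, of e b d]
  by (simp add: algebra_simps)

lemma Cl_sym: "y \<in> U \<Longrightarrow> Cl d b e y = Cl d e b y"
  unfolding Cl_def using pdg_sym[of y d b e] by (simp add: algebra_simps)

lemma GamG: "(\<Sum>e\<in>UNIV. christoffel g x e f b * g x $ e $ d) = Cl d f b x"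
proof -
  have "(\<Sum>e\<in>UNIV. christoffel g x e f b * g x $ e $ d) = (\<Sum>e\<in>UNIV. g x $ d $ e * christoffel g x e f b)"
    by (rule sum.cong) (simp_all add: gsym[OF xU, of _ d] mult.commute)
  then show ?thesis using gGam[OF xU] by simp
qed

lemma riem_Cl: "riem g x a b c d = pd b (Cl d a c) x - pd a (Cl d b c) x
   - (\<Sum>e\<in>UNIV. Cl e b d x * christoffel g x e a c) + (\<Sum>e\<in>UNIV. Cl e a d x * christoffel g x e b c)"
  unfolding riem_def riem_mixed_def
  by (rule metric_alg[where gx="\<lambda>a b. g x $ a $ b" and G = "christoffel g x"
       and dG="\<lambda>t e a b. pd t (\<lambda>y. christoffel g y e a b) x" and pdCl = "\<lambda>b d a c. pd b (Cl d a c) x"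
       and pdg = "\<lambda>b d e. pd b (\<lambda>y. g y $ d $ e) x" and Cl = "\<lambda>d a c. Cl d a c x",
       OF gdGam GamG compat Cl_sym[OF xU] gsym[OF xU]])

lemma pdCl_sum: "pd b (Cl d a c) x + pd b (Cl c a d) x = pd b (pd a (\<lambda>y. g y $ d $ c)) x"
proof -
  have "pd b (Cl d a c) x + pd b (Cl c a d) x = pd b (\<lambda>y. Cl d a c y + Cl c a d y) x"
    using pd_add[OF dCl dCl] by simp
  also have "\<dots> = pd b (pd a (\<lambda>y. g y $ d $ c)) x"
  proof (rule pd_local[OF openU xU])
    fix y assume y: "y \<in> U"
    show "Cl d a c y + Cl c a d y = pd a (\<lambda>y. g y $ d $ c) y"
      unfolding Cl_def using pdg_sym[OF y, of a c d] pdg_sym[OF y, of c a d] pdg_sym[OF y, of d c a]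
      by (simp add: algebra_simps)
  qed
  finally show ?thesis .
qed

lemma riem_anti34: "riem g x a b c d = - riem g x a b d c"
proof -
  have sch: "pd b (pd a (\<lambda>y. g y $ d $ c)) x = pd a (pd b (\<lambda>y. g y $ d $ c)) x"
    by (rule schwarz[OF openU xU dg dpdg[OF xU] dpdg[OF xU]])
  have hs: "\<And>a b. ginv g x a b = ginv g x b a" by (rule hsym[OF xU])
  have 1: "(\<Sum>e\<in>UNIV. Cl e b d x * christoffel g x e a c) = (\<Sum>e\<in>UNIV. Cl e a c x * christoffel g x e b d)" for a b c d
    unfolding Gam_Cl by (rule hsym_alg[OF hs])
  show ?thesis
    using pdCl_sum[of b d a c] pdCl_sum[of a d b c] sch 1[of b d a c] 1[of a d b c]
    unfolding riem_Cl by linarith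
qed

end

lemma covom_alg:
  fixes G :: "'n::finite \<Rightarrow> 'n \<Rightarrow> 'n \<Rightarrow> real" and W :: "'n \<Rightarrow> real"
  assumes dW: "\<And>t a. dW t a = D t a + (\<Sum>e\<in>UNIV. G e t a * W e)"
    and pdD: "\<And>t b c. pdD t b c = K t b c + (\<Sum>e\<in>UNIV. G e t b * D e c) + (\<Sum>e\<in>UNIV. G e t c * D b e)"
  defines "om \<equiv> \<lambda>a b c. (1/6) * (W a * D b c + W b * D c a + W c * D a b - W b * D a c - W a * D c b - W c * D b a)"
  shows "(1/6) * ((dW t a * D b c + W a * pdD t b c) + (dW t b * D c a + W b * pdD t c a)
      + (dW t c * D a b + W c * pdD t a b) - (dW t b * D a c + W b * pdD t a c)
      - (dW t a * D c b + W a * pdD t c b) - (dW t c * D b a + W c * pdD t b a))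
    - ((\<Sum>e\<in>UNIV. G e t a * om e b c) + (\<Sum>e\<in>UNIV. G e t b * om a e c) + (\<Sum>e\<in>UNIV. G e t c * om a b e))
   = (1/6) * (D t a * D b c + D t b * D c a + D t c * D a b - D t b * D a c - D t a * D c b - D t c * D b a
      + W a * K t b c + W b * K t c a + W c * K t a b - W b * K t a c - W a * K t c b - W c * K t b a)"
  unfolding om_def dW pdD
  by (simp add: sum.distrib sum_subtractf sum_distrib_left sum_distrib_right algebra_simps)

context st begin

definition S :: "4 \<Rightarrow> 4 \<Rightarrow> 4 \<Rightarrow> real" where
  "S t p q = (\<Sum>b\<in>UNIV. riem g x t p q b * V x $ b)"

lemma ricciS: "(\<Sum>d\<in>UNIV. riem_mixed g x t p q d * lower g V x d) = S t p q"
proof -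
  have "(\<Sum>d\<in>UNIV. riem_mixed g x t p q d * lower g V x d)
      = (\<Sum>d\<in>UNIV. \<Sum>b\<in>UNIV. riem_mixed g x t p q d * (g x $ d $ b * V x $ b))"
    unfolding lower_def by (simp add: sum_distrib_left)
  also have "\<dots> = (\<Sum>b\<in>UNIV. \<Sum>d\<in>UNIV. riem_mixed g x t p q d * g x $ d $ b * V x $ b)"
    by (subst sum.swap) (simp add: mult.assoc)
  also have "\<dots> = S t p q"
    unfolding S_def riem_def by (simp add: sum_distrib_right)
  finally show ?thesis .
qed

lemma S_anti: "S t p q = - S p t q"
  unfolding S_def by (simp add: riem_anti12[of t p] sum_negf)

lemma S_bianchi: "S t p q + S p q t + S q t p = 0"
proof -
  have "S t p q + S p q t + S q t p = (\<Sum>b\<in>UNIV. (riem g x t p q b + riem g x p q t b + riem g x q t p b) * V x $ b)"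
    unfolding S_def by (simp add: sum.distrib distrib_right)
  also have "\<dots> = 0" by (simp add: riem_bianchi)
  finally show ?thesis .
qed

abbreviation "KK t p q \<equiv> cov g (cov g (form1 (lower g V))) x [t, p, q]"

lemma killing_id: "KK t p q = - S p q t"
proof -
  have r: "KK a b c - KK b a c = S a b c" for a b c using ricci ricciS by simp
  have k: "KK a b c = - KK a c b" for a b c using K_anti[of a b c] by linarith
  show ?thesis
    using r[of t p q] r[of p q t] r[of q t p] k[of t p q] k[of p t q] k[of q p t] S_bianchi[of t p q]
    by linarith
qed

abbreviation "DD p q \<equiv> cov g (form1 (lower g V)) x [p, q]"

lemma covom: "cov g (xi_dxi g V) x [t, a, b, c] =
   (1/6) * (DD t a * DD b c + DD t b * DD c a + DD t c * DD a b - DD t b * DD a c - DD t a * DD c b - DD t c * DD b a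
      + lower g V x a * KK t b c + lower g V x b * KK t c a + lower g V x c * KK t a b
      - lower g V x b * KK t a c - lower g V x a * KK t c b - lower g V x c * KK t b a)"
proof -
  let ?w = "\<lambda>a y. lower g V y a" and ?D = "\<lambda>b c y. cov g (form1 (lower g V)) y [b, c]"
  have dm: "(\<lambda>y. ?w a y * ?D b c y) differentiable (at x)" for a b c
    by (intro differentiable_mult dw[OF xU] dDw)
  have pm: "pd t (\<lambda>y. ?w a y * ?D b c y) x = pd t (?w a) x * DD b c + lower g V x a * pd t (?D b c) x" for a b c
    by (rule pd_mult[OF dw[OF xU] dDw])
  have om: "(\<lambda>y. xi_dxi g V y [a, b, c]) = (\<lambda>y. (1/6) * (?w a y * ?D b c y + ?w b y * ?D c a y + ?w c y * ?D a b y
      - ?w b y * ?D a c y - ?w a y * ?D c b y - ?w c y * ?D b a y))"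
    by (simp add: xi_dxi_def Let_def)
  have pdom: "pd t (\<lambda>y. xi_dxi g V y [a, b, c]) x = (1/6) * ((pd t (?w a) x * DD b c + lower g V x a * pd t (?D b c) x)
     + (pd t (?w b) x * DD c a + lower g V x b * pd t (?D c a) x)
     + (pd t (?w c) x * DD a b + lower g V x c * pd t (?D a b) x)
     - (pd t (?w b) x * DD a c + lower g V x b * pd t (?D a c) x)
     - (pd t (?w a) x * DD c b + lower g V x a * pd t (?D c b) x)
     - (pd t (?w c) x * DD b a + lower g V x c * pd t (?D b a) x))"
    unfolding om
    by (simp only: pd_cmult pd_add pd_diff dm differentiable_add differentiable_diff pm)
  have cv: "cov g (xi_dxi g V) x [t, a, b, c] = pd t (\<lambda>y. xi_dxi g V y [a, b, c]) x
     - ((\<Sum>e\<in>UNIV. christoffel g x e t a * xi_dxi g V x [e, b, c])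
        + (\<Sum>e\<in>UNIV. christoffel g x e t b * xi_dxi g V x [a, e, c])
        + (\<Sum>e\<in>UNIV. christoffel g x e t c * xi_dxi g V x [a, b, e]))"
    by (simp add: cov_def[of g "xi_dxi g V"] eval_nat_numeral lessThan_Suc)
  have dWe: "pd t (?w a) x = DD t a + (\<Sum>e\<in>UNIV. christoffel g x e t a * lower g V x e)" for t a
    using Dw_eq[of x t a] by simp
  have pdDe: "pd t (?D b c) x = KK t b c + (\<Sum>e\<in>UNIV. christoffel g x e t b * DD e c) + (\<Sum>e\<in>UNIV. christoffel g x e t c * DD b e)" for t b c
    using K_eq[of t b c] by simp
  have omx: "xi_dxi g V x [a, b, c] = (1/6) * (lower g V x a * DD b c + lower g V x b * DD c a + lower g V x c * DD a b
      - lower g V x b * DD a c - lower g V x a * DD c b - lower g V x c * DD b a)" for a b c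
    by (simp add: xi_dxi_def Let_def)
  show ?thesis
    unfolding cv pdom omx
    by (rule covom_alg[where dW = "\<lambda>t a. pd t (?w a) x" and pdD = "\<lambda>t b c. pd t (?D b c) x", OF dWe pdDe])
qed

end

lemma pull1: "(\<Sum>i\<in>A. \<Sum>a\<in>B. f i a) = (\<Sum>a\<in>B. \<Sum>i\<in>A. f i a)"
  by (rule sum.swap)
lemma pull2: "(\<Sum>i\<in>A. \<Sum>a\<in>B1. \<Sum>b\<in>B2. f i a b) = (\<Sum>a\<in>B1. \<Sum>b\<in>B2. \<Sum>i\<in>A. f i a b)"
  by (subst sum.swap) (rule sum.cong[OF refl], rule pull1)
lemma pull3: "(\<Sum>i\<in>A. \<Sum>a\<in>B1. \<Sum>b\<in>B2. \<Sum>c\<in>B3. f i a b c) = (\<Sum>a\<in>B1. \<Sum>b\<in>B2. \<Sum>c\<in>B3. \<Sum>i\<in>A. f i a b c)"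
  by (subst sum.swap) (rule sum.cong[OF refl], rule pull2)
lemma pull4: "(\<Sum>i\<in>A. \<Sum>a\<in>B1. \<Sum>b\<in>B2. \<Sum>c\<in>B3. \<Sum>d\<in>B4. f i a b c d) = (\<Sum>a\<in>B1. \<Sum>b\<in>B2. \<Sum>c\<in>B3. \<Sum>d\<in>B4. \<Sum>i\<in>A. f i a b c d)"
  by (subst sum.swap) (rule sum.cong[OF refl], rule pull3)
lemma pull5: "(\<Sum>i\<in>A. \<Sum>a\<in>B1. \<Sum>b\<in>B2. \<Sum>c\<in>B3. \<Sum>d\<in>B4. \<Sum>e\<in>B5. f i a b c d e) = (\<Sum>a\<in>B1. \<Sum>b\<in>B2. \<Sum>c\<in>B3. \<Sum>d\<in>B4. \<Sum>e\<in>B5. \<Sum>i\<in>A. f i a b c d e)"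
  by (subst sum.swap) (rule sum.cong[OF refl], rule pull4)
lemma pull6: "(\<Sum>i\<in>A. \<Sum>a\<in>B1. \<Sum>b\<in>B2. \<Sum>c\<in>B3. \<Sum>d\<in>B4. \<Sum>e\<in>B5. \<Sum>k\<in>B6. f i a b c d e k) = (\<Sum>a\<in>B1. \<Sum>b\<in>B2. \<Sum>c\<in>B3. \<Sum>d\<in>B4. \<Sum>e\<in>B5. \<Sum>k\<in>B6. \<Sum>i\<in>A. f i a b c d e k)"
  by (subst sum.swap) (rule sum.cong[OF refl], rule pull5)

locale alg =
  fixes g h :: "'n::finite \<Rightarrow> 'n \<Rightarrow> real" and R :: "'n \<Rightarrow> 'n \<Rightarrow> 'n \<Rightarrow> 'n \<Rightarrow> real"
    and V w :: "'n \<Rightarrow> real" and F :: "'n \<Rightarrow> 'n \<Rightarrow> real" and K :: "'n \<Rightarrow> 'n \<Rightarrow> 'n \<Rightarrow> real"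
  assumes gs: "g a b = g b a" and hs: "h a b = h b a"
    and gh: "(\<Sum>b\<in>UNIV. g a b * h b c) = (if a = c then 1 else 0)"
    and w_def: "w a = (\<Sum>b\<in>UNIV. g a b * V b)"
    and R12: "R a b c d = - R b a c d" and R34: "R a b c d = - R a b d c"
    and RB: "R a b c d + R b c a d + R c a b d = 0"
    and Fa: "F a b = - F b a"
    and Kd: "K t p q = - (\<Sum>e\<in>UNIV. R p q t e * V e)"
begin

lemma PS: "R a b c d = R c d a b"
  using RB[of a b c d] RB[of b c d a] RB[of c d a b] RB[of d a b c]
    R12[of a b c d] R12[of b c d a] R12[of c d a b] R12[of d a b c]
    R12[of b c a d] R12[of c a b d] R12[of c d b a] R12[of d b c a] R12[of d a c b] R12[of a c d b]
    R12[of a b d c] R12[of b d a c]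
    R34[of a b c d] R34[of b c a d] R34[of c a b d] R34[of b c d a] R34[of c d b a] R34[of d b c a]
    R34[of c d a b] R34[of d a c b] R34[of a c d b] R34[of d a b c] R34[of a b d c] R34[of b d a c]
    R34[of b a d c] R34[of d c b a]
  by linarith

lemma L1: "(\<Sum>a\<in>UNIV. w a * h a b) = V b"
proof -
  have "(\<Sum>a\<in>UNIV. w a * h a b) = (\<Sum>a\<in>UNIV. \<Sum>c\<in>UNIV. g a c * V c * h a b)"
    by (simp add: w_def sum_distrib_right)
  also have "\<dots> = (\<Sum>c\<in>UNIV. V c * (\<Sum>a\<in>UNIV. g c a * h a b))"
    by (subst pull1) (simp add: sum_distrib_left gs mult_ac)
  also have "\<dots> = (\<Sum>c\<in>UNIV. if c = b then V c else 0)"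
    by (rule sum.cong) (auto simp: gh)
  finally show ?thesis by simp
qed

lemma L1': "(\<Sum>a\<in>UNIV. w a * (\<Sum>b\<in>UNIV. h a b * X b)) = (\<Sum>b\<in>UNIV. V b * X b)"
proof -
  have "(\<Sum>a\<in>UNIV. w a * (\<Sum>b\<in>UNIV. h a b * X b)) = (\<Sum>a\<in>UNIV. \<Sum>b\<in>UNIV. w a * h a b * X b)"
    by (simp add: sum_distrib_left mult.assoc)
  also have "\<dots> = (\<Sum>b\<in>UNIV. (\<Sum>a\<in>UNIV. w a * h a b) * X b)"
    by (subst pull1) (simp add: sum_distrib_right)
  finally show ?thesis by (simp add: L1)
qed

definition "Rv t b c = (\<Sum>e\<in>UNIV. V e * R e t b c)"

lemma Kr: "K t b c = Rv t b c"
  unfolding Kd Rv_def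
  by (simp add: sum_negf[symmetric] PS[of b c t] R12[of t] mult.commute)

lemma Ka: "K t b c = - K t c b"
  unfolding Kr Rv_def by (simp add: R34[of _ t b c] sum_negf)

lemma Rv34: "Rv t b c = - Rv t c b"
  unfolding Rv_def by (simp add: R34[of _ t b c] sum_negf)

definition "E b d = (\<Sum>a\<in>UNIV. \<Sum>c\<in>UNIV. V a * V c * R a b c d)"
definition "Eu s t = (\<Sum>b\<in>UNIV. \<Sum>d\<in>UNIV. h s b * h t d * E b d)"

lemma E_sym: "E b d = E d b"
proof -
  have "E d b = (\<Sum>a\<in>UNIV. \<Sum>c\<in>UNIV. V a * V c * R c b a d)" unfolding E_def by (simp add: PS[of _ d])
  also have "\<dots> = (\<Sum>c\<in>UNIV. \<Sum>a\<in>UNIV. V a * V c * R c b a d)" by (rule pull1)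
  also have "\<dots> = E b d" unfolding E_def by (simp add: mult.commute)
  finally show ?thesis by simp
qed

lemma Eu_sym: "Eu s t = Eu t s"
proof -
  have "Eu t s = (\<Sum>b\<in>UNIV. \<Sum>d\<in>UNIV. h t b * h s d * E d b)" unfolding Eu_def
    by (intro sum.cong refl) (metis E_sym)
  also have "\<dots> = (\<Sum>d\<in>UNIV. \<Sum>b\<in>UNIV. h t b * h s d * E d b)" by (rule pull1)
  also have "\<dots> = Eu s t" unfolding Eu_def by (simp add: mult.commute)
  finally show ?thesis by simp
qed

lemma VE: "(\<Sum>b\<in>UNIV. V b * E b d) = 0"
proof -
  define S where "S = (\<Sum>a\<in>UNIV. \<Sum>b\<in>UNIV. \<Sum>c\<in>UNIV. V a * V b * V c * R a b c d)"
  have "(\<Sum>b\<in>UNIV. V b * E b d) = (\<Sum>b\<in>UNIV. \<Sum>a\<in>UNIV. \<Sum>c\<in>UNIV. V a * V b * V c * R a b c d)"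
    unfolding E_def by (simp add: sum_distrib_left mult_ac)
  also have "\<dots> = S" unfolding S_def by (rule pull1)
  finally have 1: "(\<Sum>b\<in>UNIV. V b * E b d) = S" .
  have "S = (\<Sum>a\<in>UNIV. \<Sum>b\<in>UNIV. \<Sum>c\<in>UNIV. V b * V a * V c * R b a c d)" unfolding S_def by (rule pull1)
  also have "\<dots> = - S" unfolding S_def sum_negf[symmetric]
    by (intro sum.cong refl) (subst R12, simp add: mult_ac)
  finally have "S = 0" by simp
  with 1 show ?thesis by simp
qed

lemma Euw: "(\<Sum>s\<in>UNIV. Eu s t * w s) = 0"
proof -
  have "(\<Sum>s\<in>UNIV. Eu s t * w s) = (\<Sum>s\<in>UNIV. \<Sum>b\<in>UNIV. \<Sum>d\<in>UNIV. w s * h s b * (h t d * E b d))"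
    unfolding Eu_def by (simp add: sum_distrib_right sum_distrib_left mult_ac)
  also have "\<dots> = (\<Sum>b\<in>UNIV. \<Sum>d\<in>UNIV. (\<Sum>s\<in>UNIV. w s * h s b) * (h t d * E b d))"
    by (subst pull2) (simp add: sum_distrib_right)
  also have "\<dots> = (\<Sum>d\<in>UNIV. \<Sum>b\<in>UNIV. h t d * (V b * E b d))"
    by (subst pull1) (simp add: L1 mult_ac)
  also have "\<dots> = 0" by (simp add: sum_distrib_left[symmetric] VE)
  finally show ?thesis .
qed

end

context alg begin

definition "Ru a b c d = (\<Sum>a'\<in>UNIV. \<Sum>b'\<in>UNIV. \<Sum>c'\<in>UNIV. \<Sum>d'\<in>UNIV. h a a' * h b b' * h c c' * h d d' * R a' b' c' d')"
definition "Ruu a b c d = (\<Sum>a'\<in>UNIV. \<Sum>b'\<in>UNIV. \<Sum>c'\<in>UNIV. h a a' * h b b' * h c c' * R a' b' c' d)"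
definition "C t a b c = (1/6) * (F t a * F b c + F t b * F c a + F t c * F a b - F t b * F a c - F t a * F c b - F t c * F b a
      + w a * K t b c + w b * K t c a + w c * K t a b - w b * K t a c - w a * K t c b - w c * K t b a)"
definition "T1b al be la mu = (\<Sum>r\<in>UNIV. \<Sum>s\<in>UNIV. \<Sum>r'\<in>UNIV. \<Sum>s'\<in>UNIV.
        R al r la s * h r r' * h s s' * R be r' mu s')"
definition "T2b al be la mu = (\<Sum>r\<in>UNIV. \<Sum>s\<in>UNIV. \<Sum>r'\<in>UNIV. \<Sum>s'\<in>UNIV.
        R al r mu s * h r r' * h s s' * R be r' la s')"
definition "Q1 la mu = (\<Sum>r\<in>UNIV. \<Sum>t\<in>UNIV. \<Sum>s\<in>UNIV. \<Sum>r'\<in>UNIV. \<Sum>t'\<in>UNIV. \<Sum>s'\<in>UNIV.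
        R r t la s * h r r' * h t t' * h s s' * R r' t' mu s')"
definition "Q2 al be = (\<Sum>r\<in>UNIV. \<Sum>s\<in>UNIV. \<Sum>t\<in>UNIV. \<Sum>r'\<in>UNIV. \<Sum>s'\<in>UNIV. \<Sum>t'\<in>UNIV.
        R al r s t * h r r' * h s s' * h t t' * R be r' s' t')"
definition "KK = (\<Sum>r\<in>UNIV. \<Sum>t\<in>UNIV. \<Sum>s\<in>UNIV. \<Sum>n\<in>UNIV. \<Sum>r'\<in>UNIV. \<Sum>t'\<in>UNIV. \<Sum>s'\<in>UNIV. \<Sum>n'\<in>UNIV.
        R r t s n * h r r' * h t t' * h s s' * h n n' * R r' t' s' n')"
definition "B al be la mu = T1b al be la mu + T2b al be la mu - (1/2) * g al be * Q1 la mu - (1/2) * g la mu * Q2 al be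
   + (1/8) * g al be * g la mu * KK"

lemma C3: "C t a b c = (1/3) * (F t a * F b c + F t b * F c a + F t c * F a b + w a * K t b c + w b * K t c a + w c * K t a b)"
  unfolding C_def using Fa[of a c] Fa[of c b] Fa[of b a] Ka[of t a c] Ka[of t c b] Ka[of t b a]
  by (simp add: algebra_simps)

definition "X m = (\<Sum>al\<in>UNIV. \<Sum>be\<in>UNIV. \<Sum>la\<in>UNIV. V al * V be * V la * B al be la m)"
definition "X1 m = (\<Sum>al\<in>UNIV. \<Sum>be\<in>UNIV. \<Sum>la\<in>UNIV. V al * V be * V la * T1b al be la m)"
definition "X2 m = (\<Sum>al\<in>UNIV. \<Sum>be\<in>UNIV. \<Sum>la\<in>UNIV. V al * V be * V la * T2b al be la m)"
definition "Vw = (\<Sum>a\<in>UNIV. V a * w a)"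
definition "q1 m = (\<Sum>la\<in>UNIV. V la * Q1 la m)"
definition "c0 = - (1/2) * (\<Sum>al\<in>UNIV. \<Sum>be\<in>UNIV. V al * V be * Q2 al be) + (1/8) * Vw * KK"
definition "Z m = (\<Sum>be\<in>UNIV. \<Sum>rh\<in>UNIV. \<Sum>ta\<in>UNIV. \<Sum>si\<in>UNIV. V be * Ruu rh ta si m * C si rh ta be)"

lemma LHSdec: "(\<Sum>al\<in>UNIV. \<Sum>be\<in>UNIV. \<Sum>la\<in>UNIV. V al * V be * V la *
            (1/2) * (B al be la mu * w ga - B al be la ga * w mu)) = (1/2) * (X mu * w ga - X ga * w mu)"
  unfolding X_def by (simp add: sum_distrib_left sum_distrib_right sum_subtractf algebra_simps)

lemma T2dec: "(\<Sum>be\<in>UNIV. \<Sum>rh\<in>UNIV. \<Sum>ta\<in>UNIV. \<Sum>si\<in>UNIV.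
              V be * (1/2) * (Ruu rh ta si mu * w ga - Ruu rh ta si ga * w mu) * C si rh ta be)
   = (1/2) * (Z mu * w ga - Z ga * w mu)"
  unfolding Z_def by (simp add: sum_distrib_left sum_distrib_right sum_subtractf algebra_simps)

lemma Vg: "(\<Sum>al\<in>UNIV. \<Sum>be\<in>UNIV. V al * V be * g al be) = Vw"
  unfolding Vw_def w_def by (simp add: sum_distrib_left mult_ac)

lemma Vgm: "(\<Sum>la\<in>UNIV. V la * g la m) = w m"
  unfolding w_def by (simp add: gs mult.commute)

lemma Xdec: "X m = X1 m + X2 m - (1/2) * Vw * q1 m + c0 * w m"
proof -
  have 1: "(\<Sum>al\<in>UNIV. \<Sum>be\<in>UNIV. \<Sum>la\<in>UNIV. V al * V be * V la * (g al be * Q1 la m)) = Vw * q1 m"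
    unfolding Vg[symmetric] q1_def by (simp add: sum_distrib_left sum_distrib_right mult_ac)
  have 2: "(\<Sum>al\<in>UNIV. \<Sum>be\<in>UNIV. \<Sum>la\<in>UNIV. V al * V be * V la * (g la m * Q2 al be))
      = (\<Sum>al\<in>UNIV. \<Sum>be\<in>UNIV. V al * V be * Q2 al be) * w m"
    unfolding Vgm[symmetric] by (simp add: sum_distrib_left sum_distrib_right mult_ac)
  have 3: "(\<Sum>al\<in>UNIV. \<Sum>be\<in>UNIV. \<Sum>la\<in>UNIV. V al * V be * V la * (g al be * g la m * KK)) = Vw * w m * KK"
    unfolding Vg[symmetric] Vgm[symmetric] by (simp add: sum_distrib_left sum_distrib_right mult_ac)
  have "X m = X1 m + X2 m - (1/2) * (\<Sum>al\<in>UNIV. \<Sum>be\<in>UNIV. \<Sum>la\<in>UNIV. V al * V be * V la * (g al be * Q1 la m))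
     - (1/2) * (\<Sum>al\<in>UNIV. \<Sum>be\<in>UNIV. \<Sum>la\<in>UNIV. V al * V be * V la * (g la m * Q2 al be))
     + (1/8) * (\<Sum>al\<in>UNIV. \<Sum>be\<in>UNIV. \<Sum>la\<in>UNIV. V al * V be * V la * (g al be * g la m * KK))"
    unfolding X_def X1_def X2_def B_def
    by (simp add: sum.distrib sum_subtractf sum_distrib_left algebra_simps)
  also have "\<dots> = X1 m + X2 m - (1/2) * Vw * q1 m + c0 * w m"
    unfolding 1 2 3 c0_def by (simp add: algebra_simps)
  finally show ?thesis .
qed

lemma T1a: "(\<Sum>la\<in>UNIV. \<Sum>be\<in>UNIV. w la * w be * Ru la si be ta) = Eu si ta"
proof -
  have "(\<Sum>la\<in>UNIV. \<Sum>be\<in>UNIV. w la * w be * Ru la si be ta)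
     = (\<Sum>la\<in>UNIV. \<Sum>be\<in>UNIV. \<Sum>a'\<in>UNIV. \<Sum>b'\<in>UNIV. \<Sum>c'\<in>UNIV. \<Sum>d'\<in>UNIV.
          w la * w be * (h la a' * h si b' * h be c' * h ta d' * R a' b' c' d'))"
    unfolding Ru_def by (simp add: sum_distrib_left)
  also have "\<dots> = (\<Sum>la\<in>UNIV. \<Sum>a'\<in>UNIV. \<Sum>b'\<in>UNIV. \<Sum>c'\<in>UNIV. \<Sum>d'\<in>UNIV. \<Sum>be\<in>UNIV.
          w la * w be * (h la a' * h si b' * h be c' * h ta d' * R a' b' c' d'))"
    by (rule sum.cong[OF refl], rule pull4)
  also have "\<dots> = (\<Sum>a'\<in>UNIV. \<Sum>b'\<in>UNIV. \<Sum>c'\<in>UNIV. \<Sum>d'\<in>UNIV. \<Sum>la\<in>UNIV. \<Sum>be\<in>UNIV.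
          w la * w be * (h la a' * h si b' * h be c' * h ta d' * R a' b' c' d'))"
    by (rule pull4)
  also have "\<dots> = (\<Sum>a'\<in>UNIV. \<Sum>b'\<in>UNIV. \<Sum>c'\<in>UNIV. \<Sum>d'\<in>UNIV. \<Sum>la\<in>UNIV. \<Sum>be\<in>UNIV.
          (w la * h la a') * (w be * h be c') * (h si b' * h ta d' * R a' b' c' d'))"
    by (simp add: mult_ac)
  also have "\<dots> = (\<Sum>a'\<in>UNIV. \<Sum>b'\<in>UNIV. \<Sum>c'\<in>UNIV. \<Sum>d'\<in>UNIV.
          (\<Sum>la\<in>UNIV. w la * h la a') * (\<Sum>be\<in>UNIV. w be * h be c') * (h si b' * h ta d' * R a' b' c' d'))"
    unfolding sum_product by (simp only: sum_distrib_right)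
  also have "\<dots> = (\<Sum>a'\<in>UNIV. \<Sum>b'\<in>UNIV. \<Sum>c'\<in>UNIV. \<Sum>d'\<in>UNIV. V a' * V c' * (h si b' * h ta d' * R a' b' c' d'))"
    by (simp add: L1)
  also have "\<dots> = (\<Sum>b'\<in>UNIV. \<Sum>a'\<in>UNIV. \<Sum>c'\<in>UNIV. \<Sum>d'\<in>UNIV. V a' * V c' * (h si b' * h ta d' * R a' b' c' d'))"
    by (rule pull1)
  also have "\<dots> = (\<Sum>b'\<in>UNIV. \<Sum>d'\<in>UNIV. \<Sum>a'\<in>UNIV. \<Sum>c'\<in>UNIV. V a' * V c' * (h si b' * h ta d' * R a' b' c' d'))"
    by (rule sum.cong[OF refl], rule pull2[symmetric])
  also have "\<dots> = Eu si ta"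
    unfolding Eu_def E_def by (simp add: sum_distrib_left mult_ac)
  finally show ?thesis .
qed

definition "T1 mu ga = (\<Sum>la\<in>UNIV. \<Sum>si\<in>UNIV. \<Sum>be\<in>UNIV. \<Sum>ta\<in>UNIV.
              w la * w be * Ru la si be ta * C ta mu si ga)"

lemma T1dec: "T1 mu ga = (\<Sum>si\<in>UNIV. \<Sum>ta\<in>UNIV. Eu si ta * C ta mu si ga)"
proof -
  have "T1 mu ga = (\<Sum>si\<in>UNIV. \<Sum>la\<in>UNIV. \<Sum>be\<in>UNIV. \<Sum>ta\<in>UNIV. w la * w be * Ru la si be ta * C ta mu si ga)"
    unfolding T1_def by (rule pull1)
  also have "\<dots> = (\<Sum>si\<in>UNIV. \<Sum>ta\<in>UNIV. \<Sum>la\<in>UNIV. \<Sum>be\<in>UNIV. w la * w be * Ru la si be ta * C ta mu si ga)"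
    by (rule sum.cong[OF refl], rule pull2[symmetric])
  also have "\<dots> = (\<Sum>si\<in>UNIV. \<Sum>ta\<in>UNIV. (\<Sum>la\<in>UNIV. \<Sum>be\<in>UNIV. w la * w be * Ru la si be ta) * C ta mu si ga)"
    by (simp add: sum_distrib_right)
  finally show ?thesis by (simp add: T1a)
qed

end

context alg begin

definition "Y c = (\<Sum>si\<in>UNIV. \<Sum>ta\<in>UNIV. Eu si ta * K ta si c)"

lemma T1fin: "T1 mu ga = (1/3) * (w mu * Y ga - w ga * Y mu)"
proof -
  let ?S = "\<lambda>f. (\<Sum>si\<in>UNIV. \<Sum>ta\<in>UNIV. Eu si ta * f si ta)"
  have e: "T1 mu ga = (1/3) * (?S (\<lambda>si ta. F ta mu * F si ga) + ?S (\<lambda>si ta. F ta si * F ga mu)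
     + ?S (\<lambda>si ta. F ta ga * F mu si) + w mu * ?S (\<lambda>si ta. K ta si ga) + ?S (\<lambda>si ta. w si * K ta ga mu)
     + w ga * ?S (\<lambda>si ta. K ta mu si))"
    unfolding T1dec C3 by (simp add: sum.distrib sum_distrib_left algebra_simps)
  have p3: "?S (\<lambda>si ta. F ta ga * F mu si) = - ?S (\<lambda>si ta. F ta mu * F si ga)"
  proof -
    have "?S (\<lambda>si ta. F ta ga * F mu si) = (\<Sum>si\<in>UNIV. \<Sum>ta\<in>UNIV. Eu ta si * (F si ga * F mu ta))"
      by (rule pull1)
    also have "\<dots> = (\<Sum>si\<in>UNIV. \<Sum>ta\<in>UNIV. - (Eu si ta * (F ta mu * F si ga)))"
      apply (intro sum.cong refl)
      subgoal for si ta using Eu_sym[of ta si] Fa[of mu ta] by simp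
      done
    finally show ?thesis by (simp add: sum_negf)
  qed
  have p2: "?S (\<lambda>si ta. F ta si * F ga mu) = 0"
  proof -
    have "?S (\<lambda>si ta. F ta si * F ga mu) = (\<Sum>si\<in>UNIV. \<Sum>ta\<in>UNIV. Eu ta si * (F si ta * F ga mu))"
      by (rule pull1)
    also have "\<dots> = - ?S (\<lambda>si ta. F ta si * F ga mu)"
      unfolding sum_negf[symmetric]
      apply (intro sum.cong refl)
      subgoal for si ta using Eu_sym[of ta si] Fa[of si ta] by simp
      done
    finally show ?thesis by simp
  qed
  have p5: "?S (\<lambda>si ta. w si * K ta ga mu) = 0"
  proof -
    have "?S (\<lambda>si ta. w si * K ta ga mu) = (\<Sum>ta\<in>UNIV. \<Sum>si\<in>UNIV. Eu si ta * (w si * K ta ga mu))"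
      by (rule pull1)
    also have "\<dots> = (\<Sum>ta\<in>UNIV. (\<Sum>si\<in>UNIV. Eu si ta * w si) * K ta ga mu)"
      by (simp add: sum_distrib_right sum_distrib_left mult_ac)
    finally show ?thesis by (simp add: Euw)
  qed
  have p6: "?S (\<lambda>si ta. K ta mu si) = - Y mu"
    unfolding Y_def sum_negf[symmetric] by (intro sum.cong refl) (simp add: Ka[of _ mu])
  show ?thesis unfolding e p3 p2 p5 p6 by (simp add: Y_def algebra_simps)
qed

lemma Ruu_anti: "Ruu a b c d = - Ruu b a c d"
proof -
  have "Ruu b a c d = (\<Sum>a'\<in>UNIV. \<Sum>b'\<in>UNIV. \<Sum>c'\<in>UNIV. h b b' * h a a' * h c c' * R b' a' c' d)"
    unfolding Ruu_def by (rule pull1)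
  also have "\<dots> = - Ruu a b c d"
    unfolding Ruu_def sum_negf[symmetric]
    apply (intro sum.cong refl)
    subgoal for a' b' c' using R12[of b' a' c' d] by (simp add: mult_ac)
    done
  finally show ?thesis by simp
qed

lemma Ruu_cyc: "Ruu a b c d + Ruu b c a d + Ruu c a b d = 0"
proof -
  have 1: "Ruu b c a d = (\<Sum>x\<in>UNIV. \<Sum>y\<in>UNIV. \<Sum>z\<in>UNIV. h a x * h b y * h c z * R y z x d)"
  proof -
    have "Ruu b c a d = (\<Sum>y\<in>UNIV. \<Sum>z\<in>UNIV. \<Sum>x\<in>UNIV. h a x * h b y * h c z * R y z x d)"
      unfolding Ruu_def by (simp add: mult_ac)
    also have "\<dots> = (\<Sum>x\<in>UNIV. \<Sum>y\<in>UNIV. \<Sum>z\<in>UNIV. h a x * h b y * h c z * R y z x d)"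
      by (rule pull2[symmetric])
    finally show ?thesis .
  qed
  have 2: "Ruu c a b d = (\<Sum>x\<in>UNIV. \<Sum>y\<in>UNIV. \<Sum>z\<in>UNIV. h a x * h b y * h c z * R z x y d)"
  proof -
    have "Ruu c a b d = (\<Sum>z\<in>UNIV. \<Sum>x\<in>UNIV. \<Sum>y\<in>UNIV. h a x * h b y * h c z * R z x y d)"
      unfolding Ruu_def by (simp add: mult_ac)
    also have "\<dots> = (\<Sum>x\<in>UNIV. \<Sum>y\<in>UNIV. \<Sum>z\<in>UNIV. h a x * h b y * h c z * R z x y d)"
      by (rule pull2)
    finally show ?thesis .
  qed
  have "Ruu a b c d + Ruu b c a d + Ruu c a b d =
     (\<Sum>x\<in>UNIV. \<Sum>y\<in>UNIV. \<Sum>z\<in>UNIV. h a x * h b y * h c z * (R x y z d + R y z x d + R z x y d))"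
    unfolding 1 2 by (simp add: Ruu_def sum.distrib algebra_simps)
  also have "\<dots> = 0" by (simp add: RB)
  finally show ?thesis .
qed

end

context alg begin

definition "ff t = (\<Sum>b\<in>UNIV. F t b * V b)"
definition "kv s t = (\<Sum>b\<in>UNIV. K s t b * V b)"
definition "A m = (\<Sum>rh\<in>UNIV. \<Sum>ta\<in>UNIV. \<Sum>si\<in>UNIV. Ruu rh ta si m * (w rh * kv si ta))"
definition "Bm m = (\<Sum>rh\<in>UNIV. \<Sum>ta\<in>UNIV. \<Sum>si\<in>UNIV. Ruu rh ta si m * K si rh ta)"
definition "G1 m = (\<Sum>rh\<in>UNIV. \<Sum>ta\<in>UNIV. \<Sum>si\<in>UNIV. Ruu rh ta si m * (F si rh * ff ta))"

lemma Zinner: "(\<Sum>be\<in>UNIV. V be * Ruu rh ta si m * C si rh ta be) =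
   (1/3) * (Ruu rh ta si m * (F si rh * ff ta) - Ruu rh ta si m * (F si ta * ff rh) + Ruu rh ta si m * (ff si * F rh ta)
     + Ruu rh ta si m * (w rh * kv si ta) - Ruu rh ta si m * (w ta * kv si rh) + Vw * (Ruu rh ta si m * K si rh ta))"
proof -
  let ?R = "Ruu rh ta si m"
  have pw: "V be * ?R * C si rh ta be =
      ((1/3) * ?R * F si rh) * (F ta be * V be) + ((1/3) * ?R * (- F si ta)) * (F rh be * V be)
    + ((1/3) * ?R * F rh ta) * (F si be * V be) + ((1/3) * ?R * w rh) * (K si ta be * V be)
    + ((1/3) * ?R * (- w ta)) * (K si rh be * V be) + ((1/3) * ?R * K si rh ta) * (V be * w be)" for be
    unfolding C3 using Fa[of be rh] Ka[of si be rh] by (simp add: algebra_simps)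
  have "(\<Sum>be\<in>UNIV. V be * ?R * C si rh ta be) =
      ((1/3) * ?R * F si rh) * ff ta + ((1/3) * ?R * (- F si ta)) * ff rh
    + ((1/3) * ?R * F rh ta) * ff si + ((1/3) * ?R * w rh) * kv si ta
    + ((1/3) * ?R * (- w ta)) * kv si rh + ((1/3) * ?R * K si rh ta) * Vw"
    unfolding pw ff_def kv_def Vw_def by (simp only: sum.distrib sum_distrib_left[symmetric])
  then show ?thesis by (simp add: algebra_simps)
qed

lemma Zdec: "Z m = (1/3) * (G1 m
     - (\<Sum>rh\<in>UNIV. \<Sum>ta\<in>UNIV. \<Sum>si\<in>UNIV. Ruu rh ta si m * (F si ta * ff rh))
     + (\<Sum>rh\<in>UNIV. \<Sum>ta\<in>UNIV. \<Sum>si\<in>UNIV. Ruu rh ta si m * (ff si * F rh ta))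
     + A m - (\<Sum>rh\<in>UNIV. \<Sum>ta\<in>UNIV. \<Sum>si\<in>UNIV. Ruu rh ta si m * (w ta * kv si rh)) + Vw * Bm m)"
proof -
  have "Z m = (\<Sum>rh\<in>UNIV. \<Sum>ta\<in>UNIV. \<Sum>si\<in>UNIV. \<Sum>be\<in>UNIV. V be * Ruu rh ta si m * C si rh ta be)"
    unfolding Z_def by (rule pull3)
  also have "\<dots> = (\<Sum>rh\<in>UNIV. \<Sum>ta\<in>UNIV. \<Sum>si\<in>UNIV. (1/3) * (Ruu rh ta si m * (F si rh * ff ta) - Ruu rh ta si m * (F si ta * ff rh) + Ruu rh ta si m * (ff si * F rh ta)
     + Ruu rh ta si m * (w rh * kv si ta) - Ruu rh ta si m * (w ta * kv si rh) + Vw * (Ruu rh ta si m * K si rh ta)))"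
    by (simp only: Zinner)
  also have "\<dots> = (1/3) * (G1 m
     - (\<Sum>rh\<in>UNIV. \<Sum>ta\<in>UNIV. \<Sum>si\<in>UNIV. Ruu rh ta si m * (F si ta * ff rh))
     + (\<Sum>rh\<in>UNIV. \<Sum>ta\<in>UNIV. \<Sum>si\<in>UNIV. Ruu rh ta si m * (ff si * F rh ta))
     + A m - (\<Sum>rh\<in>UNIV. \<Sum>ta\<in>UNIV. \<Sum>si\<in>UNIV. Ruu rh ta si m * (w ta * kv si rh)) + Vw * Bm m)"
    unfolding G1_def A_def Bm_def
    by (simp only: sum.distrib sum_subtractf sum_distrib_left[symmetric])
  finally show ?thesis .
qed

end

context alg begin

lemma G2: "(\<Sum>rh\<in>UNIV. \<Sum>ta\<in>UNIV. \<Sum>si\<in>UNIV. Ruu rh ta si m * (F si ta * ff rh)) = - G1 m"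
proof -
  have "(\<Sum>rh\<in>UNIV. \<Sum>ta\<in>UNIV. \<Sum>si\<in>UNIV. Ruu rh ta si m * (F si ta * ff rh))
     = (\<Sum>rh\<in>UNIV. \<Sum>ta\<in>UNIV. \<Sum>si\<in>UNIV. Ruu ta rh si m * (F si rh * ff ta))"
    by (rule pull1)
  also have "\<dots> = - G1 m"
    unfolding G1_def sum_negf[symmetric]
    apply (intro sum.cong refl)
    subgoal for rh ta si using Ruu_anti[of ta rh si m] by simp
    done
  finally show ?thesis .
qed

lemma A': "(\<Sum>rh\<in>UNIV. \<Sum>ta\<in>UNIV. \<Sum>si\<in>UNIV. Ruu rh ta si m * (w ta * kv si rh)) = - A m"
proof -
  have "(\<Sum>rh\<in>UNIV. \<Sum>ta\<in>UNIV. \<Sum>si\<in>UNIV. Ruu rh ta si m * (w ta * kv si rh))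
     = (\<Sum>rh\<in>UNIV. \<Sum>ta\<in>UNIV. \<Sum>si\<in>UNIV. Ruu ta rh si m * (w rh * kv si ta))"
    by (rule pull1)
  also have "\<dots> = - A m"
    unfolding A_def sum_negf[symmetric]
    apply (intro sum.cong refl)
    subgoal for rh ta si using Ruu_anti[of ta rh si m] by simp
    done
  finally show ?thesis .
qed

lemma G3: "(\<Sum>rh\<in>UNIV. \<Sum>ta\<in>UNIV. \<Sum>si\<in>UNIV. Ruu rh ta si m * (ff si * F rh ta)) = - 2 * G1 m"
proof -
  define P where "P = (\<Sum>rh\<in>UNIV. \<Sum>ta\<in>UNIV. \<Sum>si\<in>UNIV. Ruu ta si rh m * (ff si * F rh ta))"
  define Q where "Q = (\<Sum>rh\<in>UNIV. \<Sum>ta\<in>UNIV. \<Sum>si\<in>UNIV. Ruu si rh ta m * (ff si * F rh ta))"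
  have "(\<Sum>rh\<in>UNIV. \<Sum>ta\<in>UNIV. \<Sum>si\<in>UNIV. Ruu rh ta si m * (ff si * F rh ta))
      = (\<Sum>rh\<in>UNIV. \<Sum>ta\<in>UNIV. \<Sum>si\<in>UNIV. - (Ruu ta si rh m * (ff si * F rh ta)) - Ruu si rh ta m * (ff si * F rh ta))"
    apply (intro sum.cong refl)
    subgoal for rh ta si
    proof -
      have e: "Ruu rh ta si m = - Ruu ta si rh m - Ruu si rh ta m" using Ruu_cyc[of rh ta si m] by linarith
      show ?thesis by (simp add: e algebra_simps)
    qed
    done
  also have "\<dots> = - P - Q" unfolding P_def Q_def by (simp only: sum_subtractf sum_negf)
  finally have 0: "(\<Sum>rh\<in>UNIV. \<Sum>ta\<in>UNIV. \<Sum>si\<in>UNIV. Ruu rh ta si m * (ff si * F rh ta)) = - P - Q" .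
  have p: "P = G1 m"
  proof -
    have "P = (\<Sum>ta\<in>UNIV. \<Sum>si\<in>UNIV. \<Sum>rh\<in>UNIV. Ruu ta si rh m * (ff si * F rh ta))"
      unfolding P_def by (rule pull2)
    also have "\<dots> = G1 m" unfolding G1_def by (simp add: mult_ac)
    finally show ?thesis .
  qed
  have q: "Q = G1 m"
  proof -
    have "Q = (\<Sum>si\<in>UNIV. \<Sum>rh\<in>UNIV. \<Sum>ta\<in>UNIV. Ruu si rh ta m * (ff si * F rh ta))"
      unfolding Q_def by (rule pull2[symmetric])
    also have "\<dots> = (\<Sum>rh\<in>UNIV. \<Sum>si\<in>UNIV. \<Sum>ta\<in>UNIV. Ruu si rh ta m * (ff si * F rh ta))"
      by (rule pull1)
    also have "\<dots> = G1 m"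
      unfolding G1_def
      apply (intro sum.cong refl)
      subgoal for rh si ta using Ruu_anti[of si rh ta m] Fa[of rh ta] by simp
      done
    finally show ?thesis .
  qed
  show ?thesis using 0 p q by simp
qed

lemma Zfin: "Z m = (1/3) * (2 * A m + Vw * Bm m)"
  unfolding Zdec G2 G3 A' by (simp add: algebra_simps)

end

context alg begin

lemma X1Y: "X1 m = - Y m"
proof -
  let ?b = "\<lambda>al be la r s r' s'. V al * V be * V la * (R al r la s * h r r' * h s s' * R be r' m s')"
  have "X1 m = (\<Sum>al\<in>UNIV. \<Sum>be\<in>UNIV. \<Sum>la\<in>UNIV. \<Sum>r\<in>UNIV. \<Sum>s\<in>UNIV. \<Sum>r'\<in>UNIV. \<Sum>s'\<in>UNIV. ?b al be la r s r' s')"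
    unfolding X1_def T1b_def by (simp add: sum_distrib_left)
  also have "\<dots> = (\<Sum>al\<in>UNIV. \<Sum>la\<in>UNIV. \<Sum>be\<in>UNIV. \<Sum>r\<in>UNIV. \<Sum>s\<in>UNIV. \<Sum>r'\<in>UNIV. \<Sum>s'\<in>UNIV. ?b al be la r s r' s')"
    by (rule sum.cong[OF refl], rule pull1)
  also have "\<dots> = (\<Sum>al\<in>UNIV. \<Sum>la\<in>UNIV. \<Sum>r\<in>UNIV. \<Sum>s\<in>UNIV. \<Sum>r'\<in>UNIV. \<Sum>s'\<in>UNIV. \<Sum>be\<in>UNIV. ?b al be la r s r' s')"
    by (rule sum.cong[OF refl], rule sum.cong[OF refl], rule pull4)
  also have "\<dots> = (\<Sum>al\<in>UNIV. \<Sum>r\<in>UNIV. \<Sum>s\<in>UNIV. \<Sum>r'\<in>UNIV. \<Sum>s'\<in>UNIV. \<Sum>la\<in>UNIV. \<Sum>be\<in>UNIV. ?b al be la r s r' s')"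
    by (rule sum.cong[OF refl], rule pull4)
  also have "\<dots> = (\<Sum>r\<in>UNIV. \<Sum>s\<in>UNIV. \<Sum>r'\<in>UNIV. \<Sum>s'\<in>UNIV. \<Sum>al\<in>UNIV. \<Sum>la\<in>UNIV. \<Sum>be\<in>UNIV. ?b al be la r s r' s')"
    by (rule pull4)
  also have "\<dots> = (\<Sum>r\<in>UNIV. \<Sum>s\<in>UNIV. \<Sum>r'\<in>UNIV. \<Sum>s'\<in>UNIV. E r s * (h r r' * h s s' * Rv r' m s'))"
  proof (intro sum.cong refl)
    fix r s r' s'
    have "(\<Sum>al\<in>UNIV. \<Sum>la\<in>UNIV. \<Sum>be\<in>UNIV. ?b al be la r s r' s')
       = (\<Sum>al\<in>UNIV. \<Sum>la\<in>UNIV. (V al * V la * R al r la s) * (h r r' * h s s' * Rv r' m s'))"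
      unfolding Rv_def by (simp add: sum_distrib_left mult_ac)
    also have "\<dots> = E r s * (h r r' * h s s' * Rv r' m s')"
      unfolding E_def by (simp add: sum_distrib_right)
    finally show "(\<Sum>al\<in>UNIV. \<Sum>la\<in>UNIV. \<Sum>be\<in>UNIV. ?b al be la r s r' s') = E r s * (h r r' * h s s' * Rv r' m s')" .
  qed
  finally have X: "X1 m = (\<Sum>r\<in>UNIV. \<Sum>s\<in>UNIV. \<Sum>r'\<in>UNIV. \<Sum>s'\<in>UNIV. E r s * (h r r' * h s s' * Rv r' m s'))" .
  let ?c = "\<lambda>si ta b d. h si b * h ta d * E b d * Rv ta si m"
  have "Y m = (\<Sum>si\<in>UNIV. \<Sum>ta\<in>UNIV. \<Sum>b\<in>UNIV. \<Sum>d\<in>UNIV. ?c si ta b d)"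
    unfolding Y_def Eu_def Kr by (simp add: sum_distrib_right)
  also have "\<dots> = (\<Sum>ta\<in>UNIV. \<Sum>b\<in>UNIV. \<Sum>d\<in>UNIV. \<Sum>si\<in>UNIV. ?c si ta b d)"
    by (rule pull3)
  also have "\<dots> = (\<Sum>b\<in>UNIV. \<Sum>d\<in>UNIV. \<Sum>ta\<in>UNIV. \<Sum>si\<in>UNIV. ?c si ta b d)"
    by (rule pull2)
  also have "\<dots> = (\<Sum>b\<in>UNIV. \<Sum>d\<in>UNIV. \<Sum>ta\<in>UNIV. \<Sum>si\<in>UNIV. ?c si ta d b)"
    by (rule pull1)
  also have "\<dots> = - X1 m"
    unfolding X sum_negf[symmetric]
    apply (intro sum.cong refl)
    subgoal for b d ta si using hs[of b ta] hs[of d si] E_sym[of b d] Rv34[of ta m si] by simp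
    done
  finally show ?thesis by simp
qed

lemma Lw: "(\<Sum>rh\<in>UNIV. w rh * Ruu rh ta si m) = (\<Sum>b\<in>UNIV. \<Sum>c\<in>UNIV. h ta b * h si c * Rv b c m)"
proof -
  have "(\<Sum>rh\<in>UNIV. w rh * Ruu rh ta si m)
     = (\<Sum>rh\<in>UNIV. w rh * (\<Sum>a\<in>UNIV. h rh a * (\<Sum>b\<in>UNIV. \<Sum>c\<in>UNIV. h ta b * h si c * R a b c m)))"
    unfolding Ruu_def by (simp add: sum_distrib_left mult_ac)
  also have "\<dots> = (\<Sum>a\<in>UNIV. V a * (\<Sum>b\<in>UNIV. \<Sum>c\<in>UNIV. h ta b * h si c * R a b c m))"
    by (rule L1')
  also have "\<dots> = (\<Sum>a\<in>UNIV. \<Sum>b\<in>UNIV. \<Sum>c\<in>UNIV. V a * (h ta b * h si c * R a b c m))"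
    by (simp add: sum_distrib_left)
  also have "\<dots> = (\<Sum>b\<in>UNIV. \<Sum>c\<in>UNIV. \<Sum>a\<in>UNIV. V a * (h ta b * h si c * R a b c m))"
    by (rule pull2)
  also have "\<dots> = (\<Sum>b\<in>UNIV. \<Sum>c\<in>UNIV. h ta b * h si c * Rv b c m)"
    unfolding Rv_def by (simp add: sum_distrib_left mult_ac)
  finally show ?thesis .
qed

lemma kvE: "kv s t = - E s t"
proof -
  have "kv s t = (\<Sum>b\<in>UNIV. \<Sum>e\<in>UNIV. V e * V b * R e s t b)"
    unfolding kv_def Kr Rv_def by (simp add: sum_distrib_right sum_distrib_left mult_ac)
  also have "\<dots> = (\<Sum>e\<in>UNIV. \<Sum>b\<in>UNIV. V e * V b * R e s t b)" by (rule pull1)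
  also have "\<dots> = - E s t"
    unfolding E_def sum_negf[symmetric]
    apply (intro sum.cong refl)
    subgoal for e b using R34[of e s t b] by simp
    done
  finally show ?thesis .
qed

lemma X2A: "X2 m = A m"
proof -
  let ?b = "\<lambda>al be la r s r' s'. V al * V be * V la * (R al r m s * h r r' * h s s' * R be r' la s')"
  have "X2 m = (\<Sum>al\<in>UNIV. \<Sum>be\<in>UNIV. \<Sum>la\<in>UNIV. \<Sum>r\<in>UNIV. \<Sum>s\<in>UNIV. \<Sum>r'\<in>UNIV. \<Sum>s'\<in>UNIV. ?b al be la r s r' s')"
    unfolding X2_def T2b_def by (simp add: sum_distrib_left)
  also have "\<dots> = (\<Sum>al\<in>UNIV. \<Sum>be\<in>UNIV. \<Sum>r\<in>UNIV. \<Sum>s\<in>UNIV. \<Sum>r'\<in>UNIV. \<Sum>s'\<in>UNIV. \<Sum>la\<in>UNIV. ?b al be la r s r' s')"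
    by (rule sum.cong[OF refl], rule sum.cong[OF refl], rule pull4)
  also have "\<dots> = (\<Sum>al\<in>UNIV. \<Sum>r\<in>UNIV. \<Sum>s\<in>UNIV. \<Sum>r'\<in>UNIV. \<Sum>s'\<in>UNIV. \<Sum>be\<in>UNIV. \<Sum>la\<in>UNIV. ?b al be la r s r' s')"
    by (rule sum.cong[OF refl], rule pull4)
  also have "\<dots> = (\<Sum>r\<in>UNIV. \<Sum>s\<in>UNIV. \<Sum>r'\<in>UNIV. \<Sum>s'\<in>UNIV. \<Sum>al\<in>UNIV. \<Sum>be\<in>UNIV. \<Sum>la\<in>UNIV. ?b al be la r s r' s')"
    by (rule pull4)
  also have "\<dots> = (\<Sum>r\<in>UNIV. \<Sum>s\<in>UNIV. \<Sum>r'\<in>UNIV. \<Sum>s'\<in>UNIV. Rv r m s * (h r r' * h s s' * E r' s'))"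
  proof (intro sum.cong refl)
    fix r s r' s'
    have "(\<Sum>al\<in>UNIV. \<Sum>be\<in>UNIV. \<Sum>la\<in>UNIV. ?b al be la r s r' s')
       = (\<Sum>al\<in>UNIV. (V al * R al r m s) * (h r r' * h s s' * E r' s'))"
      unfolding E_def by (simp add: sum_distrib_left mult_ac)
    also have "\<dots> = Rv r m s * (h r r' * h s s' * E r' s')"
      unfolding Rv_def by (simp add: sum_distrib_right)
    finally show "(\<Sum>al\<in>UNIV. \<Sum>be\<in>UNIV. \<Sum>la\<in>UNIV. ?b al be la r s r' s') = Rv r m s * (h r r' * h s s' * E r' s')" .
  qed
  finally have X: "X2 m = (\<Sum>r\<in>UNIV. \<Sum>s\<in>UNIV. \<Sum>r'\<in>UNIV. \<Sum>s'\<in>UNIV. Rv r m s * (h r r' * h s s' * E r' s'))" .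
  let ?c = "\<lambda>ta si b c. - (h ta b * h si c * Rv b c m * E si ta)"
  have "A m = (\<Sum>ta\<in>UNIV. \<Sum>si\<in>UNIV. \<Sum>rh\<in>UNIV. Ruu rh ta si m * (w rh * kv si ta))"
    unfolding A_def by (rule pull2)
  also have "\<dots> = (\<Sum>ta\<in>UNIV. \<Sum>si\<in>UNIV. (\<Sum>rh\<in>UNIV. w rh * Ruu rh ta si m) * kv si ta)"
    by (simp add: sum_distrib_right sum_distrib_left mult_ac)
  also have "\<dots> = (\<Sum>ta\<in>UNIV. \<Sum>si\<in>UNIV. \<Sum>b\<in>UNIV. \<Sum>c\<in>UNIV. ?c ta si b c)"
    unfolding Lw kvE by (simp add: sum_distrib_right sum_negf)
  also have "\<dots> = (\<Sum>si\<in>UNIV. \<Sum>b\<in>UNIV. \<Sum>c\<in>UNIV. \<Sum>ta\<in>UNIV. ?c ta si b c)"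
    by (rule pull3)
  also have "\<dots> = (\<Sum>b\<in>UNIV. \<Sum>c\<in>UNIV. \<Sum>si\<in>UNIV. \<Sum>ta\<in>UNIV. ?c ta si b c)"
    by (rule pull2)
  also have "\<dots> = (\<Sum>b\<in>UNIV. \<Sum>c\<in>UNIV. \<Sum>si\<in>UNIV. \<Sum>ta\<in>UNIV. ?c si ta b c)"
    by (rule sum.cong[OF refl], rule sum.cong[OF refl], rule pull1)
  also have "\<dots> = X2 m"
    unfolding X
    apply (intro sum.cong refl)
    subgoal for b c si ta using hs[of b si] hs[of c ta] E_sym[of si ta] Rv34[of b m c] by simp
    done
  finally show ?thesis by simp
qed

lemma q1B: "q1 m = - Bm m"
proof -
  let ?b = "\<lambda>la r t s r' t' s'. V la * (R r t la s * h r r' * h t t' * h s s' * R r' t' m s')"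
  have "q1 m = (\<Sum>la\<in>UNIV. \<Sum>r\<in>UNIV. \<Sum>t\<in>UNIV. \<Sum>s\<in>UNIV. \<Sum>r'\<in>UNIV. \<Sum>t'\<in>UNIV. \<Sum>s'\<in>UNIV. ?b la r t s r' t' s')"
    unfolding q1_def Q1_def by (simp add: sum_distrib_left)
  also have "\<dots> = (\<Sum>r\<in>UNIV. \<Sum>t\<in>UNIV. \<Sum>s\<in>UNIV. \<Sum>r'\<in>UNIV. \<Sum>t'\<in>UNIV. \<Sum>s'\<in>UNIV. \<Sum>la\<in>UNIV. ?b la r t s r' t' s')"
    by (rule pull6)
  also have "\<dots> = (\<Sum>r\<in>UNIV. \<Sum>t\<in>UNIV. \<Sum>s\<in>UNIV. \<Sum>r'\<in>UNIV. \<Sum>t'\<in>UNIV. \<Sum>s'\<in>UNIV.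
       Rv s r t * (h r r' * h t t' * h s s' * R r' t' m s'))"
  proof (intro sum.cong refl)
    fix r t s r' t' s'
    show "(\<Sum>la\<in>UNIV. ?b la r t s r' t' s') = Rv s r t * (h r r' * h t t' * h s s' * R r' t' m s')"
      unfolding Rv_def by (simp add: PS[of r t _ s] sum_distrib_right sum_distrib_left mult_ac)
  qed
  also have "\<dots> = - Bm m"
    unfolding Bm_def Ruu_def Kr sum_negf[symmetric] sum_distrib_right
    apply (intro sum.cong refl)
    subgoal for r t s r' t' s' using R34[of r' t' m s'] by simp
    done
  finally show ?thesis .
qed

theorem alg_main:
  "(\<Sum>al\<in>UNIV. \<Sum>be\<in>UNIV. \<Sum>la\<in>UNIV. V al * V be * V la *
            (1/2) * (B al be la mu * w ga - B al be la ga * w mu))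
       = (3/2) * (T1 mu ga
         + (\<Sum>be\<in>UNIV. \<Sum>rh\<in>UNIV. \<Sum>ta\<in>UNIV. \<Sum>si\<in>UNIV.
              V be * (1/2) * (Ruu rh ta si mu * w ga - Ruu rh ta si ga * w mu) * C si rh ta be))"
  unfolding LHSdec T2dec T1fin Xdec X1Y X2A q1B Zfin by (simp add: algebra_simps)

end

theorem mainTheorem1:
  fixes U :: "pt set" and g :: "pt \<Rightarrow> real ^ 4 ^ 4" and V :: "pt \<Rightarrow> real ^ 4"
  assumes "lorentzian_metric U g"
    and "killing U g V"
    and "x \<in> U"
  shows "(\<Sum>al\<in>UNIV. \<Sum>be\<in>UNIV. \<Sum>la\<in>UNIV. V x $ al * V x $ be * V x $ la *
            (1/2) * (bel g x al be la mu * lower g V x ga - bel g x al be la ga * lower g V x mu))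
       = (3/2) * (
           (\<Sum>la\<in>UNIV. \<Sum>si\<in>UNIV. \<Sum>be\<in>UNIV. \<Sum>ta\<in>UNIV.
              lower g V x la * lower g V x be * riem_up g x la si be ta
              * cov g (xi_dxi g V) x [ta, mu, si, ga])
         + (\<Sum>be\<in>UNIV. \<Sum>rh\<in>UNIV. \<Sum>ta\<in>UNIV. \<Sum>si\<in>UNIV.
              V x $ be * (1/2) * (riem_uuud g x rh ta si mu * lower g V x ga
                                 - riem_uuud g x rh ta si ga * lower g V x mu)
              * cov g (xi_dxi g V) x [si, rh, ta, be]))"
proof -
  interpret s: st U g V x using assms by unfold_locales
  have Fa: "cov g (form1 (lower g V)) x [a, b] = - cov g (form1 (lower g V)) x [b, a]" for a b
    using assms(2,3) unfolding killing_def by (simp add: eq_neg_iff_add_eq_0)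
  interpret a: alg "\<lambda>a b. g x $ a $ b" "ginv g x" "riem g x" "\<lambda>a. V x $ a" "lower g V x"
      "\<lambda>p q. cov g (form1 (lower g V)) x [p, q]" "\<lambda>t p q. cov g (cov g (form1 (lower g V))) x [t, p, q]"
  proof (unfold_locales)
    show "g x $ a $ b = g x $ b $ a" for a b by (rule s.gsym[OF assms(3)])
    show "ginv g x a b = ginv g x b a" for a b by (rule s.hsym[OF assms(3)])
    show "(\<Sum>b\<in>UNIV. g x $ a $ b * ginv g x b c) = (if a = c then 1 else 0)" for a c by (rule s.ginv_l[OF assms(3)])
    show "lower g V x a = (\<Sum>b\<in>UNIV. g x $ a $ b * V x $ b)" for a by (simp add: lower_def)
    show "riem g x a b c d = - riem g x b a c d" for a b c d by (rule s.riem_anti12)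
    show "riem g x a b c d = - riem g x a b d c" for a b c d by (rule s.riem_anti34)
    show "riem g x a b c d + riem g x b c a d + riem g x c a b d = 0" for a b c d by (rule s.riem_bianchi)
    show "cov g (form1 (lower g V)) x [a, b] = - cov g (form1 (lower g V)) x [b, a]" for a b by (rule Fa)
    show "cov g (cov g (form1 (lower g V))) x [t, p, q] = - (\<Sum>e\<in>UNIV. riem g x p q t e * V x $ e)" for t p q
      using s.killing_id[of t p q] by (simp add: s.S_def)
  qed
  have B: "bel g x al be la mu = a.B al be la mu" for al be la mu
    by (simp add: bel_def a.B_def a.T1b_def a.T2b_def a.Q1_def a.Q2_def a.KK_def)
  have Ru: "riem_up g x a b c d = a.Ru a b c d" for a b c d by (simp add: riem_up_def a.Ru_def)
  have Ruu: "riem_uuud g x a b c d = a.Ruu a b c d" for a b c d by (simp add: riem_uuud_def a.Ruu_def)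
  have C: "cov g (xi_dxi g V) x [t, a, b, c] = a.C t a b c" for t a b c by (simp add: s.covom a.C_def)
  show ?thesis
    unfolding B Ru Ruu C using a.alg_main[of mu ga] unfolding a.T1_def .
qed

end
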